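(* In the setting described in the context, suppose that the closed-loop system $\Sigma_0$ is USGES with functions $r\mapsto M(r)$, $r\mapsto\lambda(r)$ (i.e. $\|\phi^{\Sigma_0}(t,x,\sigma)\|\le M(r)e^{-\lambda(r)t}\|x\|$ for all $r>0$, $t\ge0$, $x\in B_X(0,r)$, $\sigma\in\mathrm{PC}$) satisfying $\lim_{r\to\infty}\frac{r}{M(r)}=+\infty$. Then for every $r>0$ there exists $\delta^\star(r)>0$ such that the sampled-data system $\Sigma$ is UES in $B_X(0,r)$ whenever the maximal sampling time $\delta=\sup_{k\ge0}(s_{k+1}-s_k)$ of the sampling sequence is smaller than $\delta^\star(r)$.
   Context: $X,U$ are Banach spaces, $B_X(0,r)$ the closed ball of radius $r$. $A$ is the infinitesimal generator of a $C_0$-group $(T_t)_{t\in\mathbb{R}}$ of bounded linear operators on $X$. $\mathcal{Q}$ is a nonempty set, $\mathrm{PC}$ the set of piecewise constant $\sigma:\mathbb{R}_+\to\mathcal{Q}$. For $q\in\mathcal{Q}$, $f_q:X\times U\to X$ is Lipschitz with constant $L_f>0$ independent of $q$ and $f_q(0,0)=0$; $K:X\to U$ is globally Lipschitz with $K(0)=0$. Closed-loop system $\Sigma_0$: for $q\in\mathcal{Q}$, $T_q(t)x_0$ is the mild solution $x(t)=T_tx_0+\int_0^tT_{t-s}f_q(x(s),K(x(s)))ds$, and for $\sigma\in\mathrm{PC}$ equal to $q_k$ on $[t_k,t_{k+1})$ ($0=t_0<t_1<\cdots\to\infty$), $\phi^{\Sigma_0}(t,x_0,\sigma)=T_{q_k}(t-t_k)T_{q_{k-1}}(t_k-t_{k-1})\cdots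 T_{q_0}(t_1)x_0$ for $t\in[t_k,t_{k+1})$. Sampled-data system $\Sigma$: given sampling instants $s_0=0<s_1<\cdots$ with $s_k\to\infty$, $\phi^\Sigma(t,x_0,\sigma)=x^\Sigma(t)$, where $x^\Sigma$ is the unique continuous function with $x^\Sigma(0)=x_0$ and, for $k\ge0$, $s_k\le t<s_{k+1}$, $x^\Sigma(t)=T_{t-s_k}x^\Sigma(s_k)+\int_0^{t-s_k}T_{t-s_k-s}f_{\sigma(s+s_k)}(x^\Sigma(s+s_k),K(T_sx^\Sigma(s_k)))ds$ (mild solution of $\dot x=Ax+f_{\sigma(t)}(x,K(T_{t-s_k}x(s_k)))$). $\Sigma$ is UES in $B_X(0,r)$ if there exist $M,\lambda>0$ with $\|\phi^\Sigma(t,x,\sigma)\|\le Me^{-\lambda t}\|x\|$ for all $t\ge0$, $x\in B_X(0,r)$, $\sigma\in\mathrm{PC}$. *)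

theory Defs
  imports "HOL-Analysis.Analysis"
begin

text \<open>Strongly continuous (C0) group of bounded linear operators on X.
  (Its infinitesimal generator A is determined by the group and does not
  otherwise enter the statement.)\<close>
definition C0_group :: "(real \<Rightarrow> 'x::banach \<Rightarrow> 'x) \<Rightarrow> bool" where
  "C0_group T \<longleftrightarrow>
     (\<forall>t. bounded_linear (T t)) \<and> T 0 = id \<and>
     (\<forall>s t. T (s + t) = T s \<circ> T t) \<and>
     (\<forall>x. continuous_on UNIV (\<lambda>t. T t x))"

definition time_seq :: "(nat \<Rightarrow> real) \<Rightarrow> bool" where
  "time_seq tt \<longleftrightarrow> tt 0 = 0 \<and> strict_mono tt \<and> filterlim tt at_top sequentially"

definition adapted_switching :: "(real \<Rightarrow> 'q) \<Rightarrow> (nat \<Rightarrow> real) \<Rightarrow> bool" where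
  "adapted_switching \<sigma> tt \<longleftrightarrow> time_seq tt \<and>
     (\<forall>k t. tt k \<le> t \<and> t < tt (Suc k) \<longrightarrow> \<sigma> t = \<sigma> (tt k))"

text \<open>Piecewise constant switching signals R_+ \<rightarrow> Q (values on negative times irrelevant).\<close>
definition PC :: "(real \<Rightarrow> 'q) set" where
  "PC = {\<sigma>. \<exists>tt. adapted_switching \<sigma> tt}"

text \<open>y is the trajectory phi^{Sigma_0}(., x0, sigma) of the closed-loop system:
  on each switching interval [t_k,t_{k+1}) it is the mild solution of mode q_k
  started at y(t_k), i.e. y(t) = T_{q_k}(t - t_k) y(t_k).\<close>
definition closed_loop_traj ::
  "(real \<Rightarrow> 'x::banach \<Rightarrow> 'x) \<Rightarrow> ('q \<Rightarrow> 'x \<Rightarrow> 'u \<Rightarrow> 'x) \<Rightarrow> ('x \<Rightarrow> 'u)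
    \<Rightarrow> (real \<Rightarrow> 'q) \<Rightarrow> 'x \<Rightarrow> (real \<Rightarrow> 'x) \<Rightarrow> bool" where
  "closed_loop_traj T f K \<sigma> x0 y \<longleftrightarrow>
     continuous_on {0..} y \<and> y 0 = x0 \<and>
     (\<exists>tt. adapted_switching \<sigma> tt \<and>
        (\<forall>k t. tt k \<le> t \<and> t < tt (Suc k) \<longrightarrow>
           ((\<lambda>s. T (t - tt k - s) (f (\<sigma> (tt k)) (y (s + tt k)) (K (y (s + tt k)))))
              has_integral (y t - T (t - tt k) (y (tt k)))) {0..t - tt k}))"

definition sampled_traj ::
  "(real \<Rightarrow> 'x::banach \<Rightarrow> 'x) \<Rightarrow> ('q \<Rightarrow> 'x \<Rightarrow> 'u \<Rightarrow> 'x) \<Rightarrow> ('x \<Rightarrow> 'u)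
    \<Rightarrow> (nat \<Rightarrow> real) \<Rightarrow> (real \<Rightarrow> 'q) \<Rightarrow> 'x \<Rightarrow> (real \<Rightarrow> 'x) \<Rightarrow> bool" where
  "sampled_traj T f K sk \<sigma> x0 y \<longleftrightarrow>
     continuous_on {0..} y \<and> y 0 = x0 \<and>
     (\<forall>k t. sk k \<le> t \<and> t < sk (Suc k) \<longrightarrow>
        ((\<lambda>s. T (t - sk k - s) (f (\<sigma> (s + sk k)) (y (s + sk k)) (K (T s (y (sk k))))))
           has_integral (y t - T (t - sk k) (y (sk k)))) {0..t - sk k})"

end

theory Submission
  imports Defs
begin

lemma C0_lin: "C0_group T \<Longrightarrow> bounded_linear (T t)"
  by (simp add: C0_group_def)
lemma C0_zero: "C0_group T \<Longrightarrow> T 0 v = v"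
  by (simp add: C0_group_def)
lemma C0_add: "C0_group T \<Longrightarrow> T (s + t) v = T s (T t v)"
  by (simp add: C0_group_def)
lemma C0_cont: "C0_group T \<Longrightarrow> continuous_on UNIV (\<lambda>t. T t v)"
  by (simp add: C0_group_def)

lemma T_add: assumes "C0_group T" shows "T t (u + v) = T t u + T t v"
proof - interpret bounded_linear "T t" by (rule C0_lin[OF assms]) show ?thesis by (rule add) qed
lemma T_diff: assumes "C0_group T" shows "T t (u - v) = T t u - T t v"
proof - interpret bounded_linear "T t" by (rule C0_lin[OF assms]) show ?thesis by (rule diff) qed
lemma T_scale: assumes "C0_group T" shows "T t (c *\<^sub>R v) = c *\<^sub>R T t v"
proof - interpret bounded_linear "T t" by (rule C0_lin[OF assms]) show ?thesis by (rule scaleR) qed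
lemma T_0: assumes "C0_group T" shows "T t 0 = 0"
proof - interpret bounded_linear "T t" by (rule C0_lin[OF assms]) show ?thesis by (rule zero) qed
lemma T_minus: assumes "C0_group T" shows "T t (- v) = - T t v"
proof - interpret bounded_linear "T t" by (rule C0_lin[OF assms]) show ?thesis by (rule neg) qed

lemma C0_ubp:
  fixes T :: "real \<Rightarrow> 'x::banach \<Rightarrow> 'x"
  assumes G: "C0_group T"
  shows "\<exists>C\<ge>1. \<forall>t\<in>{-1..1}. \<forall>v. norm (T t v) \<le> C * norm v"
proof -
  define E where "E n = {v. \<forall>t\<in>{-1..1::real}. norm (T t v) \<le> real n}" for n :: nat
  have clE: "closed (E n)" for n
  proof -
    have "E n = (\<Inter>t\<in>{-1..1}. {v. norm (T t v) \<le> real n})"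
      by (auto simp: E_def)
    moreover have "closed {v. norm (T t v) \<le> real n}" for t
      by (intro closed_Collect_le continuous_intros linear_continuous_on
            bounded_linear.linear C0_lin[OF G])
    ultimately show ?thesis by auto
  qed
  have unE: "\<Union>(range E) = UNIV"
  proof (safe)
    fix v :: 'x
    have "compact ((\<lambda>t. T t v) ` {-1..1})"
      by (rule compact_continuous_image) (auto intro: continuous_on_subset[OF C0_cont[OF G]])
    then obtain B where B: "\<forall>y\<in>(\<lambda>t. T t v) ` {-1..1}. norm y \<le> B"
      using compact_imp_bounded bounded_iff by metis
    have "v \<in> E (nat \<lceil>B\<rceil>)"
      using B unfolding E_def by (auto intro: order_trans[OF _ real_nat_ceiling_ge])
    then show "v \<in> \<Union>(range E)" by blast
  qed simp
  have "\<exists>n. interior (E n) \<noteq> {}"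
  proof (rule ccontr)
    assume A: "\<not> ?thesis"
    have "euclidean interior_of \<Union>(range E) = {}"
    proof (rule Baire_category_alt)
      show "completely_metrizable_space (euclidean::'x topology) \<or> locally_compact_space (euclidean::'x topology) \<and> regular_space (euclidean::'x topology)"
        using completely_metrizable_space_euclidean by blast
      show "countable (range E)" by simp
      fix S assume "S \<in> range E"
      then obtain n where "S = E n" by blast
      then show "closedin euclidean S \<and> euclidean interior_of S = {}"
        using A clE closed_closedin by auto
    qed
    then show False using unE by simp
  qed
  then obtain n v0 where "v0 \<in> interior (E n)" by blast
  then obtain e where e: "e > 0" "ball v0 e \<subseteq> E n"
    using mem_interior by blast
  define C where "C = max 1 (4 * real n / e)"
  have "\<forall>t\<in>{-1..1}. \<forall>v. norm (T t v) \<le> C * norm v"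
  proof (intro ballI allI)
    fix t :: real and v :: 'x
    assume t: "t \<in> {-1..1}"
    show "norm (T t v) \<le> C * norm v"
    proof (cases "v = 0")
      case True
      then show ?thesis using T_0[OF G] by simp
    next
      case False
      define u where "u = (e / 2 / norm v) *\<^sub>R v"
      have nu: "norm u = e / 2" using False e by (simp add: u_def)
      have "v0 + u \<in> E n" "v0 \<in> E n"
        using e nu by (auto intro!: subsetD[OF e(2)] simp: dist_norm)
      then have "norm (T t (v0 + u)) \<le> n" "norm (T t v0) \<le> n" using t by (auto simp: E_def)
      moreover have "norm (T t u) \<le> norm (T t (v0 + u)) + norm (T t v0)"
        using norm_triangle_ineq4[of "T t (v0 + u)" "T t v0"] by (simp add: T_add[OF G])
      ultimately have Tu: "norm (T t u) \<le> 2 * real n"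
        by linarith
      have "T t v = (2 * norm v / e) *\<^sub>R T t u"
        using False e by (simp add: u_def T_scale[OF G])
      then have "norm (T t v) = (2 * norm v / e) * norm (T t u)"
        using e by simp
      also have "\<dots> \<le> (2 * norm v / e) * (2 * real n)"
        using Tu e by (intro mult_left_mono) auto
      also have "\<dots> = (4 * real n / e) * norm v" by (simp add: field_simps)
      also have "\<dots> \<le> C * norm v" unfolding C_def by (intro mult_right_mono) auto
      finally show ?thesis .
    qed
  qed
  moreover have "C \<ge> 1" by (simp add: C_def)
  ultimately show ?thesis by blast
qed

lemma C0_exp_bound:
  fixes T :: "real \<Rightarrow> 'x::banach \<Rightarrow> 'x"
  assumes G: "C0_group T"
  shows "\<exists>C \<omega>. C \<ge> 1 \<and> \<omega> \<ge> 0 \<and> (\<forall>t v. norm (T t v) \<le> C * exp (\<omega> * \<bar>t\<bar>) * norm v)"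
proof -
  obtain C where C: "C \<ge> 1" "\<forall>t\<in>{-1..1}. \<forall>v. norm (T t v) \<le> C * norm v"
    using C0_ubp[OF G] by blast
  have ind: "\<forall>t v. \<bar>t\<bar> \<le> real n + 1 \<longrightarrow> norm (T t v) \<le> C ^ (n + 1) * norm v" for n
  proof (induction n)
    case 0
    then show ?case using C by (auto simp: abs_le_iff)
  next
    case (Suc n)
    show ?case
    proof (intro allI impI)
      fix t :: real and v :: 'x
      assume t: "\<bar>t\<bar> \<le> real (Suc n) + 1"
      define s where "s = max (-1) (min 1 t)"
      have s1: "s \<in> {-1..1}" by (simp add: s_def)
      have s2: "\<bar>t - s\<bar> \<le> real n + 1" using t unfolding s_def
        by (simp add: max_def min_def abs_le_iff split: if_splits)
      note s = s1 s2
      have "T t v = T s (T (t - s) v)" using C0_add[OF G, of s "t - s" v] by simp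
      then have "norm (T t v) \<le> C * norm (T (t - s) v)" using C s by simp
      also have "\<dots> \<le> C * (C ^ (n + 1) * norm v)"
        using Suc.IH s C by (intro mult_left_mono) auto
      finally show "norm (T t v) \<le> C ^ (Suc n + 1) * norm v" by simp
    qed
  qed
  have "\<forall>t v. norm (T t v) \<le> C * exp (ln C * \<bar>t\<bar>) * norm v"
  proof (intro allI)
    fix t :: real and v :: 'x
    define n where "n = nat \<lfloor>\<bar>t\<bar>\<rfloor>"
    have n1: "\<bar>t\<bar> \<le> real n + 1" "real n \<le> \<bar>t\<bar>" unfolding n_def by linarith+
    have "norm (T t v) \<le> C ^ (n + 1) * norm v" using ind n1 by blast
    also have "C ^ (n + 1) = C * exp (ln C * real n)"
    proof -
      have "exp (ln C * real n) = exp (ln C) ^ n" by (simp add: mult.commute exp_of_nat_mult)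
      also have "\<dots> = C ^ n" using C by simp
      finally show ?thesis by simp
    qed
    also have "\<dots> \<le> C * exp (ln C * \<bar>t\<bar>)"
      using C n1 by (intro mult_left_mono) (auto intro: mult_left_mono)
    finally show "norm (T t v) \<le> C * exp (ln C * \<bar>t\<bar>) * norm v"
      by (smt (verit) mult_right_mono norm_ge_zero)
  qed
  then show ?thesis using C by (intro exI[of _ C] exI[of _ "ln C"]) auto
qed

lemma T_joint_cont:
  fixes T :: "real \<Rightarrow> 'x::banach \<Rightarrow> 'x"
  assumes G: "C0_group T" and u: "continuous_on S u" and p: "continuous_on S \<phi>"
  shows "continuous_on S (\<lambda>s. T (\<phi> s) (u s))"
proof -
  obtain C \<omega> where C: "C \<ge> 1" "\<omega> \<ge> 0" "\<And>t v. norm (T t v) \<le> C * exp (\<omega> * \<bar>t\<bar>) * norm v"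
    using C0_exp_bound[OF G] by blast
  show ?thesis unfolding continuous_on_def
  proof
    fix x assume x: "x \<in> S"
    have c1: "continuous_on S (\<lambda>s. T (\<phi> s) (u x))"
      by (rule continuous_on_compose2[OF C0_cont[OF G] p]) auto
    then have 1: "((\<lambda>s. T (\<phi> s) (u x)) \<longlongrightarrow> T (\<phi> x) (u x)) (at x within S)"
      using x unfolding continuous_on_def by blast
    have "((\<lambda>s. C * exp (\<omega> * \<bar>\<phi> s\<bar>) * norm (u s - u x)) \<longlongrightarrow> C * exp (\<omega> * \<bar>\<phi> x\<bar>) * norm (u x - u x)) (at x within S)"
      using x u p unfolding continuous_on_def by (intro tendsto_intros) auto
    then have "((\<lambda>s. C * exp (\<omega> * \<bar>\<phi> s\<bar>) * norm (u s - u x)) \<longlongrightarrow> 0) (at x within S)"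
      by simp
    then have 2: "((\<lambda>s. T (\<phi> s) (u s - u x)) \<longlongrightarrow> 0) (at x within S)"
      by (rule Lim_null_comparison[rotated]) (auto intro!: always_eventually C(3))
    have "((\<lambda>s. T (\<phi> s) (u s - u x) + T (\<phi> s) (u x)) \<longlongrightarrow> 0 + T (\<phi> x) (u x)) (at x within S)"
      by (intro tendsto_add 1 2)
    then show "((\<lambda>s. T (\<phi> s) (u s)) \<longlongrightarrow> T (\<phi> x) (u x)) (at x within S)"
      by (simp add: T_diff[OF G])
  qed
qed

lemma lip_pair_bound:
  assumes "lipschitz_on L UNIV (\<lambda>(x, u). f x u)"
  shows "norm (f x u - f x' u') \<le> L * (norm (x - x') + norm (u - u'))"
proof -
  have "dist ((\<lambda>(x, u). f x u) (x, u)) ((\<lambda>(x, u). f x u) (x', u')) \<le> L * dist (x, u) (x', u')"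
    by (rule lipschitz_onD[OF assms]) auto
  moreover have "dist (x, u) (x', u') \<le> norm (x - x') + norm (u - u')"
    using norm_Pair_le[of "x - x'" "u - u'"] by (simp add: dist_norm)
  moreover have "L \<ge> 0" using lipschitz_on_nonneg[OF assms] .
  ultimately show ?thesis
    by (smt (verit) dist_norm mult_left_mono split_conv)
qed

lemma lip_bound:
  assumes "lipschitz_on L UNIV K"
  shows "norm (K x - K x') \<le> L * norm (x - x')"
  using lipschitz_onD[OF assms] by (simp add: dist_norm)

lemma lip_pair_cont:
  assumes "lipschitz_on L UNIV (\<lambda>(x, u). f x u)" "continuous_on S a" "continuous_on S b"
  shows "continuous_on S (\<lambda>s. f (a s) (b s))"
proof -
  have "continuous_on UNIV (\<lambda>(x, u). f x u)"
    using lipschitz_on_continuous_on[OF assms(1)] .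
  from continuous_on_compose2[OF this continuous_on_Pair[OF assms(2,3)]]
  show ?thesis by auto
qed

lemma lip_cont:
  assumes "lipschitz_on L UNIV K" "continuous_on S a"
  shows "continuous_on S (\<lambda>s. K (a s))"
  using continuous_on_compose2[OF lipschitz_on_continuous_on[OF assms(1)] assms(2)] by auto

subsection \<open>Time sequences\<close>

lemma ts_0: "time_seq p \<Longrightarrow> p 0 = 0" by (simp add: time_seq_def)
lemma ts_sm: "time_seq p \<Longrightarrow> strict_mono p" by (simp add: time_seq_def)
lemma ts_mono: "time_seq p \<Longrightarrow> i \<le> j \<Longrightarrow> p i \<le> p j"
  using strict_mono_less_eq[OF ts_sm, of p i j] by simp
lemma ts_less: "time_seq p \<Longrightarrow> i < j \<Longrightarrow> p i < p j"
  using strict_mono_less[OF ts_sm, of p i j] by simp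
lemma ts_nonneg: "time_seq p \<Longrightarrow> p k \<ge> 0"
  using ts_mono[of p 0 k] ts_0[of p] by simp
lemma ts_unbounded: "time_seq p \<Longrightarrow> \<exists>n. b < p n"
proof -
  assume "time_seq p"
  then have "filterlim p at_top sequentially" by (simp add: time_seq_def)
  then have "eventually (\<lambda>n. b + 1 \<le> p n) sequentially" by (simp add: filterlim_at_top)
  then obtain n where "b + 1 \<le> p n" by (auto simp: eventually_sequentially)
  then show ?thesis by (intro exI[of _ n]) auto
qed
lemma ts_idx: assumes "time_seq p" "0 \<le> s" shows "\<exists>k. p k \<le> s \<and> s < p (Suc k)"
proof -
  obtain n where n: "s < p n" using ts_unbounded[OF assms(1)] by blast
  define m where "m = (LEAST n. s < p n)"
  have m: "s < p m" unfolding m_def using n by (rule LeastI)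
  have m0: "m \<noteq> 0"
  proof
    assume "m = 0" then show False using m assms(2) ts_0[OF assms(1)] by simp
  qed
  then obtain k where k: "m = Suc k" using not0_implies_Suc by blast
  have "k < (LEAST n. s < p n)" using k unfolding m_def by simp
  then have "\<not> s < p k" by (rule not_less_Least)
  then show ?thesis using m k by (intro exI[of _ k]) auto
qed
lemma ts_idx_unique:
  assumes "time_seq p" "p k \<le> s" "s < p (Suc k)" "p j \<le> s" "s < p (Suc j)"
  shows "k = j"
proof (rule ccontr)
  assume "k \<noteq> j"
  then consider "k < j" | "j < k" by linarith
  then show False
  proof cases
    case 1 then have "p (Suc k) \<le> p j" using ts_mono[OF assms(1)] by simp
    then show False using assms by linarith
  next
    case 2 then have "p (Suc j) \<le> p k" using ts_mono[OF assms(1)] by simp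
    then show False using assms by linarith
  qed
qed

lemma adapted_const: "adapted_switching \<sigma> tt \<Longrightarrow> tt k \<le> t \<Longrightarrow> t < tt (Suc k) \<Longrightarrow> \<sigma> t = \<sigma> (tt k)"
  unfolding adapted_switching_def by blast
lemma adapted_ts: "adapted_switching \<sigma> tt \<Longrightarrow> time_seq tt"
  unfolding adapted_switching_def by blast

subsection \<open>Piecewise integrability\<close>

lemma integrable_trivial_real:
  fixes F :: "real \<Rightarrow> 'a::banach"
  assumes "b \<le> a" shows "F integrable_on {a..b}"
proof (cases "a = b")
  case True then show ?thesis using integrable_on_refl[of F a] by simp
next
  case False then have "{a..b} = {}" using assms by auto
  then show ?thesis by (simp add: integrable_on_empty)
qed

lemma piecewise_integrable:
  fixes F :: "real \<Rightarrow> 'a::banach"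
  assumes p: "time_seq p" and a: "0 \<le> a"
    and pieces: "\<And>k. F integrable_on {max a (p k)..min b (p (Suc k))}"
  shows "F integrable_on {a..b}"
proof -
  have ind: "F integrable_on {a..max a (min b (p n))}" for n
  proof (induction n)
    case 0
    then show ?case using ts_0[OF p] a integrable_trivial_real[of a a F] by simp
  next
    case (Suc n)
    define l where "l = max a (min b (p n))"
    define u where "u = max a (min b (p (Suc n)))"
    have lu: "l \<le> u" unfolding l_def u_def using ts_mono[OF p, of n "Suc n"] by auto
    have "F integrable_on {l..u}"
    proof (cases "l < u")
      case True
      then have "p n < b" unfolding l_def u_def by (auto simp: max_def min_def split: if_splits)
      then have "l = max a (p n)" unfolding l_def by auto
      moreover have "u = min b (p (Suc n))" using True \<open>l = max a (p n)\<close> unfolding u_def by auto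
      ultimately show ?thesis using pieces by simp
    next
      case False then show ?thesis by (simp add: integrable_trivial_real)
    qed
    moreover have "a \<le> l" by (simp add: l_def)
    ultimately show ?case using Suc.IH Henstock_Kurzweil_Integration.integrable_combine[where a=a and c=l and b=u and f=F] lu
      unfolding l_def u_def by simp
  qed
  obtain n where n: "b < p n" using ts_unbounded[OF p] by blast
  show ?thesis
  proof (cases "a \<le> b")
    case True
    then have "max a (min b (p n)) = b" using n by simp
    then show ?thesis using ind[of n] by simp
  next
    case False then show ?thesis using integrable_trivial_real[of b a F] by simp
  qed
qed

lemma switched_integrable:
  fixes g :: "'q \<Rightarrow> real \<Rightarrow> 'a::banach"
  assumes ad: "adapted_switching \<sigma> tt" and a: "0 \<le> a"
    and gc: "\<And>q. continuous_on {a..b} (g q)"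
  shows "(\<lambda>s. g (\<sigma> s) s) integrable_on {a..b}"
proof -
  have ts: "time_seq tt" using adapted_ts[OF ad] .
  show ?thesis
  proof (rule piecewise_integrable[OF ts a])
    fix k
    have sub: "{max a (tt k)..min b (tt (Suc k))} \<subseteq> {a..b}" by auto
    have I: "g (\<sigma> (tt k)) integrable_on {max a (tt k)..min b (tt (Suc k))}"
      by (rule integrable_continuous_interval[OF continuous_on_subset[OF gc sub]])
    have E: "g (\<sigma> s) s = g (\<sigma> (tt k)) s"
      if "s \<in> {max a (tt k)..min b (tt (Suc k))} - {tt (Suc k)}" for s
    proof -
      from that have "tt k \<le> s" "s < tt (Suc k)" by auto
      then have "\<sigma> s = \<sigma> (tt k)" using adapted_const[OF ad] by blast
      then show ?thesis by simp
    qed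
    show "(\<lambda>s. g (\<sigma> s) s) integrable_on {max a (tt k)..min b (tt (Suc k))}"
      by (rule integrable_spike_finite[where S="{tt (Suc k)}" and f="g (\<sigma> (tt k))", OF _ E I]) simp_all
  qed
qed

lemma T_has_integral:
  assumes G: "C0_group T" and "(g has_integral I) {a..b::real}"
  shows "((\<lambda>s. T t (g s)) has_integral T t I) {a..b}"
  using has_integral_linear[OF assms(2) C0_lin[OF G]] by (simp add: o_def)

lemma has_integral_norm_le:
  fixes g :: "real \<Rightarrow> 'a::banach"
  assumes "(g has_integral I) {a..b}" "a \<le> b" "\<And>s. s \<in> {a..b} \<Longrightarrow> norm (g s) \<le> B"
  shows "norm I \<le> B * (b - a)"
proof (cases "a = b")
  case True
  then have "(g has_integral 0) {a..b}" using has_integral_refl(2)[of g a] by simp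
  then have "I = 0" using has_integral_unique assms(1) by blast
  then show ?thesis using True by simp
next
  case False
  have "norm (g a) \<le> B" using assms(3)[of a] assms(2) by simp
  then have "B \<ge> 0" using norm_ge_zero[of "g a"] by linarith
  show ?thesis
    using has_integral_bound[OF \<open>B \<ge> 0\<close> assms(1)[unfolded cbox_interval[symmetric]]] assms
      content_real[OF assms(2)] by (auto simp: cbox_interval)
qed

lemma cont_eq_right_end:
  fixes F G :: "real \<Rightarrow> 'a::real_normed_vector"
  assumes "a < b" "continuous_on {a..b} F" "continuous_on {a..b} G"
    "\<And>t. t \<in> {a..<b} \<Longrightarrow> F t = G t"
  shows "F b = G b"
proof -
  have "(F \<longlongrightarrow> F b) (at_left b)" "(G \<longlongrightarrow> G b) (at_left b)"
    using assms(1-3) by (auto simp: continuous_on_def at_within_Icc_at_left[symmetric])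
  moreover have "eventually (\<lambda>t. F t = G t) (at_left b)"
    using eventually_at_left_real[OF assms(1)] by eventually_elim (auto intro: assms(4))
  ultimately have "(F \<longlongrightarrow> G b) (at_left b)" by (simp add: tendsto_cong)
  then show ?thesis using \<open>(F \<longlongrightarrow> F b) (at_left b)\<close> by (intro tendsto_unique[OF trivial_limit_at_left_real])
qed

definition idx :: "(nat \<Rightarrow> real) \<Rightarrow> real \<Rightarrow> nat" where
  "idx p s = (THE k. p k \<le> s \<and> s < p (Suc k))"

lemma idx_eq: assumes "time_seq p" "p k \<le> s" "s < p (Suc k)" shows "idx p s = k"
  unfolding idx_def using assms ts_idx_unique[OF assms(1)] by (intro the_equality) blast+

lemma idx_prop: assumes "time_seq p" "0 \<le> s" shows "p (idx p s) \<le> s" "s < p (Suc (idx p s))"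
proof -
  obtain k where k: "p k \<le> s" "s < p (Suc k)" using ts_idx[OF assms] by blast
  then have "idx p s = k" using idx_eq[OF assms(1)] by blast
  then show "p (idx p s) \<le> s" "s < p (Suc (idx p s))" using k by auto
qed

lemma mild_restart:
  fixes T :: "real \<Rightarrow> 'x::banach \<Rightarrow> 'x"
  assumes G: "C0_group T"
    and w: "\<And>t. 0 \<le> t \<Longrightarrow> T (-t) (y t) = y0 + integral {0..t} (\<lambda>s. T (-s) (Fn s))"
    and int: "\<And>b. (\<lambda>s. T (-s) (Fn s)) integrable_on {0..b}"
    and ct: "0 \<le> c" "c \<le> t"
  shows "((\<lambda>s. T (t - s) (Fn s)) has_integral (y t - T (t - c) (y c))) {c..t}"
proof -
  let ?H = "\<lambda>s. T (-s) (Fn s)"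
  have Tinv: "T a (T (-a) v) = v" for a v using C0_add[OF G, of a "-a" v] C0_zero[OF G] by simp
  have comb: "integral {0..c} ?H + integral {c..t} ?H = integral {0..t} ?H"
    using ct int[of t] by (intro Henstock_Kurzweil_Integration.integral_combine) auto
  have e1: "T (-t) (y t) - T (-c) (y c) = integral {0..t} ?H - integral {0..c} ?H"
  proof -
    have a1: "T (-t) (y t) = y0 + integral {0..t} ?H" using w ct by auto
    have a2: "T (-c) (y c) = y0 + integral {0..c} ?H" using w ct by auto
    show ?thesis unfolding a1 a2 by (rule add_diff_cancel_left)
  qed
  have eq: "integral {c..t} ?H = T (-t) (y t) - T (-c) (y c)"
    unfolding e1 comb[symmetric] by (rule add_diff_cancel_left'[symmetric])
  have "(?H has_integral integral {c..t} ?H) {c..t}"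
    using int[of t] ct by (intro integrable_integral integrable_subinterval_real[OF int[of t]]) auto
  from T_has_integral[OF G this, of t]
  have "((\<lambda>s. T t (T (-s) (Fn s))) has_integral T t (T (-t) (y t) - T (-c) (y c))) {c..t}"
    by (simp add: eq)
  moreover have "T t (T (-t) (y t) - T (-c) (y c)) = y t - T (t - c) (y c)"
    using Tinv C0_add[OF G, of t "-c"] by (simp add: T_diff[OF G])
  moreover have "T t (T (-s) v) = T (t - s) v" for s v using C0_add[OF G, of t "-s" v] by simp
  ultimately show ?thesis by simp
qed

lemma T_comp: "C0_group T \<Longrightarrow> T a (T b v) = T (a + b) v"
  using C0_add[of T a b v] by simp

lemma sampled_mild:
  fixes T :: "real \<Rightarrow> 'x::banach \<Rightarrow> 'x" and f :: "'q \<Rightarrow> 'x \<Rightarrow> 'u::banach \<Rightarrow> 'x"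
  assumes G: "C0_group T"
    and f_lip: "\<forall>q. lipschitz_on Lf UNIV (\<lambda>(x, u). f q x u)"
    and K_lip: "lipschitz_on LK UNIV K"
    and sk: "time_seq sk" and ad: "adapted_switching \<sigma> tt"
    and y: "sampled_traj T f K sk \<sigma> x0 y"
  defines "Fs \<equiv> \<lambda>s. f (\<sigma> s) (y s) (K (T (s - sk (idx sk s)) (y (sk (idx sk s)))))"
  shows "\<And>a b. 0 \<le> a \<Longrightarrow> (\<lambda>s. T (-s) (Fs s)) integrable_on {a..b}"
    and "\<And>t. 0 \<le> t \<Longrightarrow> T (-t) (y t) = x0 + integral {0..t} (\<lambda>s. T (-s) (Fs s))"
proof -
  let ?H = "\<lambda>s. T (-s) (Fs s)"
  have yc: "continuous_on {0..} y" and y0: "y 0 = x0"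
    and yeq: "\<And>k t. sk k \<le> t \<Longrightarrow> t < sk (Suc k) \<Longrightarrow>
        ((\<lambda>s. T (t - sk k - s) (f (\<sigma> (s + sk k)) (y (s + sk k)) (K (T s (y (sk k))))))
           has_integral (y t - T (t - sk k) (y (sk k)))) {0..t - sk k}"
    using y unfolding sampled_traj_def by blast+
  have idxk: "idx sk s = k" if "sk k \<le> s" "s < sk (Suc k)" for k s
    using idx_eq[OF sk that] .
  show int: "?H integrable_on {a..b}" if a: "0 \<le> a" for a b
  proof (rule piecewise_integrable[OF sk a])
    fix k
    define J where "J = {max a (sk k)..min b (sk (Suc k))}"
    define Gk where "Gk = (\<lambda>q s. T (-s) (f q (y s) (K (T (s - sk k) (y (sk k))))))"
    have J0: "J \<subseteq> {0..}" using a unfolding J_def by auto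
    have ycJ: "continuous_on J y" using continuous_on_subset[OF yc J0] .
    have "continuous_on J (Gk q)" for q
      unfolding Gk_def
      by (intro T_joint_cont[OF G] lip_pair_cont[OF f_lip[rule_format] ycJ]
          lip_cont[OF K_lip] continuous_intros)
    then have I: "(\<lambda>s. Gk (\<sigma> s) s) integrable_on J"
      unfolding J_def using a by (intro switched_integrable[OF ad]) auto
    have E: "?H s = Gk (\<sigma> s) s" if "s \<in> J - {sk (Suc k)}" for s
    proof -
      from that have "sk k \<le> s" "s < sk (Suc k)" unfolding J_def by auto
      then have "idx sk s = k" by (rule idxk)
      then show ?thesis unfolding Fs_def Gk_def by simp
    qed
    show "?H integrable_on {max a (sk k)..min b (sk (Suc k))}"
      using integrable_spike_finite[where S="{sk (Suc k)}" and f="\<lambda>s. Gk (\<sigma> s) s", OF _ E I]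
      unfolding J_def by simp
  qed
  have S1: "(?H has_integral (T (-t) (y t) - T (- sk k) (y (sk k)))) {sk k..t}"
    if t: "sk k \<le> t" "t < sk (Suc k)" for k t
  proof -
    from T_has_integral[OF G yeq[OF t], of "-t"]
    have h: "((\<lambda>s. T (-t) (T (t - sk k - s) (f (\<sigma> (s + sk k)) (y (s + sk k)) (K (T s (y (sk k)))))))
       has_integral (T (-t) (y t) - T (- sk k) (y (sk k)))) {0..t - sk k}"
      by (simp add: T_diff[OF G] T_comp[OF G])
    have "((\<lambda>s. ?H (s + sk k)) has_integral (T (-t) (y t) - T (- sk k) (y (sk k)))) {0..t - sk k}"
    proof (rule has_integral_eq[OF _ h])
      fix s assume s: "s \<in> {0..t - sk k}"
      then have "idx sk (s + sk k) = k" using t by (intro idxk) auto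
      then show "T (-t) (T (t - sk k - s) (f (\<sigma> (s + sk k)) (y (s + sk k)) (K (T s (y (sk k))))))
          = ?H (s + sk k)"
        unfolding Fs_def by (simp add: T_comp[OF G] algebra_simps)
    qed
    then show ?thesis
      using has_integral_shift_real_ivl_iff[of ?H _ "sk k" t "sk k"] by simp
  qed
  have S3: "T (-t) (y t) - T (- sk k) (y (sk k)) = integral {sk k..t} ?H"
    if t: "sk k \<le> t" "t \<le> sk (Suc k)" for k t
  proof (cases "t < sk (Suc k)")
    case True
    then show ?thesis using S1[OF t(1) True] by (simp add: integral_unique)
  next
    case False
    then have tb: "t = sk (Suc k)" using t by simp
    have lt: "sk k < sk (Suc k)" using ts_less[OF sk] by simp
    have sub: "{sk k..sk (Suc k)} \<subseteq> {0..}" using ts_nonneg[OF sk, of k] by auto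
    have "(\<lambda>t. T (-t) (y t) - T (- sk k) (y (sk k))) (sk (Suc k)) = (\<lambda>t. integral {sk k..t} ?H) (sk (Suc k))"
    proof (rule cont_eq_right_end[OF lt])
      show "continuous_on {sk k..sk (Suc k)} (\<lambda>t. T (-t) (y t) - T (- sk k) (y (sk k)))"
        by (intro continuous_intros T_joint_cont[OF G] continuous_on_subset[OF yc sub])
      show "continuous_on {sk k..sk (Suc k)} (\<lambda>t. integral {sk k..t} ?H)"
        by (rule indefinite_integral_continuous_1[OF int]) (rule ts_nonneg[OF sk])
      fix s assume "s \<in> {sk k..<sk (Suc k)}"
      then show "T (-s) (y s) - T (- sk k) (y (sk k)) = integral {sk k..s} ?H"
        using S1[of k s] by (simp add: integral_unique)
    qed
    then show ?thesis using tb by simp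
  qed
  have S4: "\<forall>t\<in>{sk k..sk (Suc k)}. T (-t) (y t) = x0 + integral {0..t} ?H" for k
  proof (induction k)
    case 0
    show ?case
    proof
      fix t assume "t \<in> {sk 0..sk (Suc 0)}"
      then show "T (-t) (y t) = x0 + integral {0..t} ?H"
        using S3[of 0 t] ts_0[OF sk] y0 C0_zero[OF G] by (simp add: algebra_simps)
    qed
  next
    case (Suc k)
    show ?case
    proof
      fix t assume t: "t \<in> {sk (Suc k)..sk (Suc (Suc k))}"
      have e1: "T (-t) (y t) = T (- sk (Suc k)) (y (sk (Suc k))) + integral {sk (Suc k)..t} ?H"
        using S3[of "Suc k" t] t by (simp add: algebra_simps)
      have e2: "T (- sk (Suc k)) (y (sk (Suc k))) = x0 + integral {0..sk (Suc k)} ?H"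
        using Suc.IH ts_mono[OF sk, of k "Suc k"] by auto
      have "integral {0..sk (Suc k)} ?H + integral {sk (Suc k)..t} ?H = integral {0..t} ?H"
        using t ts_nonneg[OF sk, of "Suc k"]
        by (intro Henstock_Kurzweil_Integration.integral_combine int) auto
      then show "T (-t) (y t) = x0 + integral {0..t} ?H"
        unfolding e1 e2 by (simp add: add.assoc)
    qed
  qed
  show "T (-t) (y t) = x0 + integral {0..t} ?H" if "0 \<le> t" for t
    using S4[of "idx sk t"] idx_prop[OF sk that] by auto
qed

lemma cont_max0:
  fixes P :: "real \<Rightarrow> 'a::topological_space"
  assumes "\<And>b. 0 \<le> b \<Longrightarrow> continuous_on {0..b} P"
  shows "continuous_on UNIV (\<lambda>t. P (max 0 t))"
proof (rule continuous_at_imp_continuous_on, intro ballI)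
  fix x :: real
  define b where "b = \<bar>x\<bar> + 1"
  have "continuous_on {-b..b} (\<lambda>t. P (max 0 t))"
    by (rule continuous_on_compose2[OF assms[of b]]) (auto simp: b_def intro: continuous_intros)
  moreover have "x \<in> interior {-b..b}" by (auto simp: b_def)
  ultimately show "isCont (\<lambda>t. P (max 0 t)) x" by (rule continuous_on_interior)
qed

lemma exp_has_integral:
  fixes c t :: real
  assumes "c > 0" "0 \<le> t"
  shows "((\<lambda>s. exp (c * s)) has_integral (exp (c * t) - 1) / c) {0..t}"
proof -
  have "((\<lambda>s. exp (c * s)) has_integral (exp (c * t) / c - exp (c * 0) / c)) {0..t}"
  proof (rule fundamental_theorem_of_calculus[OF assms(2)])
    fix x assume "x \<in> {0..t}"
    have "((\<lambda>s. exp (c * s) / c) has_real_derivative (exp (c * x) * c / c)) (at x within {0..t})"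
      by (auto intro!: derivative_eq_intros)
    then show "((\<lambda>s. exp (c * s) / c) has_vector_derivative exp (c * x)) (at x within {0..t})"
      using assms by (simp add: has_real_derivative_iff_has_vector_derivative)
  qed
  then show ?thesis by (simp add: diff_divide_distrib)
qed

lemma conv_bound:
  fixes T :: "real \<Rightarrow> 'x::banach \<Rightarrow> 'x"
  assumes G: "C0_group T"
    and C: "\<And>t v. norm (T t v) \<le> C * exp (\<omega> * \<bar>t\<bar>) * norm v" and "C \<ge> 0"
    and g: "\<gamma> > \<omega>" and t: "0 \<le> t"
    and int: "(\<lambda>s. T (-s) (\<psi> s)) integrable_on {0..t}"
    and \<psi>: "\<And>s. s \<in> {0..t} \<Longrightarrow> norm (\<psi> s) \<le> A * exp (\<gamma> * s)"
  shows "exp (- \<gamma> * t) * norm (T t (integral {0..t} (\<lambda>s. T (-s) (\<psi> s)))) \<le> C * A / (\<gamma> - \<omega>)"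
proof -
  have A: "A \<ge> 0" using \<psi>[of 0] t by (smt (verit) atLeastAtMost_iff exp_gt_zero mult_nonneg_nonneg norm_ge_zero zero_le_mult_iff)
  have h1: "((\<lambda>s. T t (T (-s) (\<psi> s))) has_integral T t (integral {0..t} (\<lambda>s. T (-s) (\<psi> s)))) {0..t}"
    by (rule T_has_integral[OF G integrable_integral[OF int]])
  have h2: "((\<lambda>s. T (t - s) (\<psi> s)) has_integral T t (integral {0..t} (\<lambda>s. T (-s) (\<psi> s)))) {0..t}"
    using h1 by (simp add: T_comp[OF G])
  have h3: "((\<lambda>s. (C * A * exp (\<omega> * t)) * exp ((\<gamma> - \<omega>) * s)) has_integral
      (C * A * exp (\<omega> * t)) * ((exp ((\<gamma> - \<omega>) * t) - 1) / (\<gamma> - \<omega>))) {0..t}"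
    using exp_has_integral[of "\<gamma> - \<omega>" t] g t by (intro has_integral_mult_right) auto
  have bnd: "norm (T (t - s) (\<psi> s)) \<le> (C * A * exp (\<omega> * t)) * exp ((\<gamma> - \<omega>) * s)" if s: "s \<in> {0..t}" for s
  proof -
    have "norm (T (t - s) (\<psi> s)) \<le> C * exp (\<omega> * \<bar>t - s\<bar>) * norm (\<psi> s)" by (rule C)
    also have "\<dots> \<le> C * exp (\<omega> * \<bar>t - s\<bar>) * (A * exp (\<gamma> * s))"
      using \<psi>[OF s] \<open>C \<ge> 0\<close> by (intro mult_left_mono) auto
    also have "\<dots> = (C * A * exp (\<omega> * t)) * exp ((\<gamma> - \<omega>) * s)"
      using s by (simp add: exp_add[symmetric] algebra_simps)
    finally show ?thesis .
  qed
  have "norm (T t (integral {0..t} (\<lambda>s. T (-s) (\<psi> s)))) \<le>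
      (C * A * exp (\<omega> * t)) * ((exp ((\<gamma> - \<omega>) * t) - 1) / (\<gamma> - \<omega>))"
    using integral_norm_bound_integral[OF has_integral_integrable[OF h2] has_integral_integrable[OF h3] bnd]
      integral_unique[OF h2] integral_unique[OF h3] by simp
  also have "\<dots> \<le> (C * A * exp (\<omega> * t)) * (exp ((\<gamma> - \<omega>) * t) / (\<gamma> - \<omega>))"
    using g A \<open>C \<ge> 0\<close> by (intro mult_left_mono divide_right_mono) auto
  also have "\<dots> = exp (\<gamma> * t) * (C * A / (\<gamma> - \<omega>))"
    by (simp add: exp_add[symmetric] algebra_simps)
  finally have "norm (T t (integral {0..t} (\<lambda>s. T (-s) (\<psi> s)))) \<le> exp (\<gamma> * t) * (C * A / (\<gamma> - \<omega>))" .
  then have "exp (- \<gamma> * t) * norm (T t (integral {0..t} (\<lambda>s. T (-s) (\<psi> s)))) \<le>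
      exp (- \<gamma> * t) * (exp (\<gamma> * t) * (C * A / (\<gamma> - \<omega>)))"
    by (intro mult_left_mono) auto
  also have "\<dots> = C * A / (\<gamma> - \<omega>)" by (simp add: exp_add[symmetric] mult.assoc[symmetric])
  finally show ?thesis .
qed

lemma closed_loop_exists:
  fixes T :: "real \<Rightarrow> 'x::banach \<Rightarrow> 'x" and f :: "'q \<Rightarrow> 'x \<Rightarrow> 'u::banach \<Rightarrow> 'x"
    and K :: "'x \<Rightarrow> 'u"
  assumes G: "C0_group T"
    and f_lip: "\<forall>q. lipschitz_on Lf UNIV (\<lambda>(x, u). f q x u)"
    and f_zero: "\<forall>q. f q 0 0 = 0"
    and K_lip: "lipschitz_on LK UNIV K" and K_zero: "K 0 = 0"
    and ad: "adapted_switching \<sigma> tt"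
  shows "\<exists>z. closed_loop_traj T f K \<sigma> x0 z \<and> continuous_on UNIV z \<and>
     (\<forall>t\<ge>0. T (-t) (z t) = x0 + integral {0..t} (\<lambda>s. T (-s) (f (\<sigma> s) (z s) (K (z s))))) \<and>
     (\<forall>a b. 0 \<le> a \<longrightarrow> (\<lambda>s. T (-s) (f (\<sigma> s) (z s) (K (z s)))) integrable_on {a..b})"
proof -
  obtain C \<omega> where C: "C \<ge> 1" "\<omega> \<ge> 0" and Cb: "\<And>t v. norm (T t v) \<le> C * exp (\<omega> * \<bar>t\<bar>) * norm v"
    using C0_exp_bound[OF G] by blast
  have Lf0: "Lf \<ge> 0" using lipschitz_on_nonneg f_lip by blast
  have LK0: "LK \<ge> 0" using lipschitz_on_nonneg K_lip by blast
  define L1 where "L1 = Lf * (1 + LK)"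
  have L10: "L1 \<ge> 0" using Lf0 LK0 by (simp add: L1_def)
  have gl: "norm (f q x (K x) - f q x' (K x')) \<le> L1 * norm (x - x')" for q x x'
  proof -
    have "norm (f q x (K x) - f q x' (K x')) \<le> Lf * (norm (x - x') + norm (K x - K x'))"
      using lip_pair_bound[OF f_lip[rule_format, of q]] .
    also have "\<dots> \<le> Lf * (norm (x - x') + LK * norm (x - x'))"
      using lip_bound[OF K_lip] Lf0 by (intro mult_left_mono add_left_mono) auto
    also have "\<dots> = L1 * norm (x - x')" by (simp add: L1_def algebra_simps)
    finally show ?thesis .
  qed
  have gb: "norm (f q x (K x)) \<le> L1 * norm x" for q x
    using gl[of q x 0] f_zero K_zero by simp
  define \<gamma> where "\<gamma> = \<omega> + 2 * C * L1 + 1"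
  have CL0: "C * L1 \<ge> 0" using C L10 by simp
  have g\<omega>: "\<gamma> > \<omega>" using CL0 by (simp add: \<gamma>_def)
  have contr: "C * L1 / (\<gamma> - \<omega>) \<le> 1 / 2"
    using CL0 by (simp add: \<gamma>_def field_simps)
  define Z :: "(real \<Rightarrow>\<^sub>C 'x) \<Rightarrow> real \<Rightarrow> 'x" where "Z u s = exp (\<gamma> * s) *\<^sub>R apply_bcontfun u s" for u s
  define Hf where "Hf u s = T (-s) (f (\<sigma> s) (Z u s) (K (Z u s)))" for u s
  define P where "P u t = exp (- \<gamma> * t) *\<^sub>R T t (x0 + integral {0..t} (Hf u))" for u t
  have Zc: "continuous_on S (Z u)" for u S
    unfolding Z_def by (intro continuous_intros) auto
  have HI: "Hf u integrable_on {a..b}" if "0 \<le> a" for u a b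
  proof -
    have "(\<lambda>s. (\<lambda>q s. T (-s) (f q (Z u s) (K (Z u s)))) (\<sigma> s) s) integrable_on {a..b}"
      by (rule switched_integrable[OF ad that])
         (intro T_joint_cont[OF G] lip_pair_cont[OF f_lip[rule_format] Zc] lip_cont[OF K_lip Zc]
           continuous_intros)
    then show ?thesis unfolding Hf_def by simp
  qed
  have PC: "continuous_on {0..b} (P u)" if "0 \<le> b" for u b
    unfolding P_def
    by (intro continuous_intros T_joint_cont[OF G] indefinite_integral_continuous_1 HI) auto
  have Pbnd: "norm (P u t) \<le> C * norm x0 + C * (L1 * B) / (\<gamma> - \<omega>)"
    if t: "0 \<le> t" and B: "\<And>s. norm (apply_bcontfun u s) \<le> B" for u t B
  proof -
    have "P u t = exp (- \<gamma> * t) *\<^sub>R T t x0 + exp (- \<gamma> * t) *\<^sub>R T t (integral {0..t} (Hf u))"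
      unfolding P_def by (simp add: T_add[OF G] scaleR_add_right)
    then have "norm (P u t) \<le> exp (- \<gamma> * t) * norm (T t x0) + exp (- \<gamma> * t) * norm (T t (integral {0..t} (Hf u)))"
      by (metis (no_types, lifting) abs_exp_cancel norm_scaleR norm_triangle_ineq)
    moreover have "exp (- \<gamma> * t) * norm (T t x0) \<le> C * norm x0"
    proof -
      have "exp (- \<gamma> * t) * norm (T t x0) \<le> exp (- \<gamma> * t) * (C * exp (\<omega> * \<bar>t\<bar>) * norm x0)"
        using Cb by (intro mult_left_mono) auto
      also have "\<dots> = (C * norm x0) * exp ((\<omega> - \<gamma>) * t)"
        using t by (simp add: exp_add[symmetric] algebra_simps)
      also have "\<dots> \<le> (C * norm x0) * 1"
        using t g\<omega> C by (intro mult_left_mono) (auto simp: mult_nonpos_nonneg)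
      finally show ?thesis by simp
    qed
    moreover have "exp (- \<gamma> * t) * norm (T t (integral {0..t} (Hf u))) \<le> C * (L1 * B) / (\<gamma> - \<omega>)"
      unfolding Hf_def
    proof (rule conv_bound[OF G Cb _ g\<omega> t])
      show "(\<lambda>s. T (- s) (f (\<sigma> s) (Z u s) (K (Z u s)))) integrable_on {0..t}"
        using HI[of 0 u t] unfolding Hf_def by simp
      fix s assume "s \<in> {0..t}"
      have "norm (f (\<sigma> s) (Z u s) (K (Z u s))) \<le> L1 * norm (Z u s)" by (rule gb)
      also have "\<dots> = L1 * (exp (\<gamma> * s) * norm (apply_bcontfun u s))" by (simp add: Z_def)
      also have "\<dots> \<le> L1 * (exp (\<gamma> * s) * B)"
        using B L10 by (intro mult_left_mono) auto
      finally show "norm (f (\<sigma> s) (Z u s) (K (Z u s))) \<le> L1 * B * exp (\<gamma> * s)" by (simp add: ac_simps)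
    qed (use C in auto)
    ultimately show ?thesis by linarith
  qed
  have Pin: "(\<lambda>t. P u (max 0 t)) \<in> bcontfun" for u
  proof -
    obtain B where B: "\<And>s. norm (apply_bcontfun u s) \<le> B"
      using bounded_apply_bcontfun[of u] unfolding bounded_iff by blast
    have "continuous_on UNIV (\<lambda>t. P u (max 0 t))" by (rule cont_max0[OF PC])
    moreover have "bounded (range (\<lambda>t. P u (max 0 t)))"
      unfolding bounded_iff using Pbnd[OF max.cobounded1 B] by (intro exI[of _ "C * norm x0 + C * (L1 * B) / (\<gamma> - \<omega>)"]) auto
    ultimately show ?thesis by (simp add: bcontfun_def)
  qed
  define \<Phi> where "\<Phi> u = Bcontfun (\<lambda>t. P u (max 0 t))" for u
  have \<Phi>app: "apply_bcontfun (\<Phi> u) t = P u (max 0 t)" for u t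
    unfolding \<Phi>_def using Bcontfun_inverse[OF Pin[of u]] by simp
  have lip\<Phi>: "dist (\<Phi> u) (\<Phi> v) \<le> 1 / 2 * dist u v" for u v
  proof (rule dist_bound)
    fix t
    define t' where "t' = max 0 (t::real)"
    have t': "0 \<le> t'" by (simp add: t'_def)
    define \<psi> where "\<psi> s = f (\<sigma> s) (Z u s) (K (Z u s)) - f (\<sigma> s) (Z v s) (K (Z v s))" for s
    have "integral {0..t'} (Hf u) - integral {0..t'} (Hf v) = integral {0..t'} (\<lambda>s. Hf u s - Hf v s)"
      using HI[of 0 u t'] HI[of 0 v t'] by (simp add: integral_diff)
    also have "\<dots> = integral {0..t'} (\<lambda>s. T (-s) (\<psi> s))"
      unfolding Hf_def \<psi>_def by (simp add: T_diff[OF G])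
    finally have idiff: "integral {0..t'} (Hf u) - integral {0..t'} (Hf v) = integral {0..t'} (\<lambda>s. T (-s) (\<psi> s))" .
    have "P u t' - P v t' = exp (- \<gamma> * t') *\<^sub>R T t' (integral {0..t'} (\<lambda>s. T (-s) (\<psi> s)))"
      unfolding P_def idiff[symmetric] by (simp add: T_add[OF G] T_diff[OF G] algebra_simps)
    then have "dist (apply_bcontfun (\<Phi> u) t) (apply_bcontfun (\<Phi> v) t) = exp (- \<gamma> * t') * norm (T t' (integral {0..t'} (\<lambda>s. T (-s) (\<psi> s))))"
      by (simp add: \<Phi>app t'_def[symmetric] dist_norm)
    also have "\<dots> \<le> C * (L1 * dist u v) / (\<gamma> - \<omega>)"
    proof (rule conv_bound[OF G Cb _ g\<omega> t'])
      have "(\<lambda>s. Hf u s - Hf v s) integrable_on {0..t'}"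
        using HI[of 0 u t'] HI[of 0 v t'] by (intro integrable_diff) auto
      then show "(\<lambda>s. T (- s) (\<psi> s)) integrable_on {0..t'}"
        unfolding Hf_def \<psi>_def by (simp add: T_diff[OF G])
      fix s assume "s \<in> {0..t'}"
      have "norm (\<psi> s) \<le> L1 * norm (Z u s - Z v s)" unfolding \<psi>_def by (rule gl)
      also have "\<dots> = L1 * (exp (\<gamma> * s) * dist (apply_bcontfun u s) (apply_bcontfun v s))"
        by (simp add: Z_def dist_norm scaleR_diff_right[symmetric])
      also have "\<dots> \<le> L1 * (exp (\<gamma> * s) * dist u v)"
        using L10 dist_bounded[of u s v] by (intro mult_left_mono) auto
      finally show "norm (\<psi> s) \<le> L1 * dist u v * exp (\<gamma> * s)" by (simp add: ac_simps)
    qed (use C in auto)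
    also have "\<dots> = (C * L1 / (\<gamma> - \<omega>)) * dist u v" by simp
    also have "\<dots> \<le> 1 / 2 * dist u v" using contr by (intro mult_right_mono) auto
    finally show "dist (apply_bcontfun (\<Phi> u) t) (apply_bcontfun (\<Phi> v) t) \<le> 1 / 2 * dist u v" .
  qed
  obtain u where u: "\<Phi> u = u" using banach_fix_type[of "1/2" \<Phi>] lip\<Phi> by auto
  define z where "z = Z u"
  have zc: "continuous_on UNIV z" unfolding z_def by (rule Zc)
  have zeq: "z t = T t (x0 + integral {0..t} (Hf u))" if "0 \<le> t" for t
  proof -
    have "apply_bcontfun u t = P u t" using \<Phi>app[of u t] u that by simp
    then show ?thesis using that by (simp add: z_def Z_def P_def exp_add[symmetric])
  qed
  have Hz: "Hf u s = T (-s) (f (\<sigma> s) (z s) (K (z s)))" for s by (simp add: Hf_def z_def)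
  have W: "T (-t) (z t) = x0 + integral {0..t} (\<lambda>s. T (-s) (f (\<sigma> s) (z s) (K (z s))))" if "0 \<le> t" for t
  proof -
    have Hz': "Hf u = (\<lambda>s. T (-s) (f (\<sigma> s) (z s) (K (z s))))" by (rule ext) (rule Hz)
    have "T (-t) (z t) = T (-t) (T t (x0 + integral {0..t} (Hf u)))" using zeq[OF that] by simp
    also have "\<dots> = x0 + integral {0..t} (Hf u)" by (simp add: T_comp[OF G] C0_zero[OF G])
    finally show ?thesis unfolding Hz' .
  qed
  have I: "(\<lambda>s. T (-s) (f (\<sigma> s) (z s) (K (z s)))) integrable_on {a..b}" if "0 \<le> a" for a b
    using HI[OF that, of u b] unfolding Hz .
  have CL: "closed_loop_traj T f K \<sigma> x0 z"
    unfolding closed_loop_traj_def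
  proof (intro conjI exI[of _ tt] allI impI)
    show "continuous_on {0..} z" using continuous_on_subset[OF zc] by blast
    show "z 0 = x0" using zeq[of 0] C0_zero[OF G] by simp
    show "adapted_switching \<sigma> tt" by (rule ad)
    fix k t assume kt: "tt k \<le> t \<and> t < tt (Suc k)"
    have tk0: "0 \<le> tt k" using ts_nonneg[OF adapted_ts[OF ad]] .
    have R: "((\<lambda>s. T (t - s) (f (\<sigma> s) (z s) (K (z s)))) has_integral (z t - T (t - tt k) (z (tt k)))) {tt k..t}"
      by (rule mild_restart[OF G W I]) (use kt tk0 in auto)
    then have R2: "((\<lambda>s. T (t - (s + tt k)) (f (\<sigma> (s + tt k)) (z (s + tt k)) (K (z (s + tt k)))))
        has_integral (z t - T (t - tt k) (z (tt k)))) {tt k - tt k..t - tt k}"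
      using has_integral_shift_real_ivl_iff[of "\<lambda>s. T (t - s) (f (\<sigma> s) (z s) (K (z s)))" _ "tt k" t "tt k"]
      by simp
    show "((\<lambda>s. T (t - tt k - s) (f (\<sigma> (tt k)) (z (s + tt k)) (K (z (s + tt k)))))
        has_integral (z t - T (t - tt k) (z (tt k)))) {0..t - tt k}"
    proof (rule has_integral_eq[OF _ R2[simplified]])
      fix s assume s: "s \<in> {0..t - tt k}"
      then have "\<sigma> (s + tt k) = \<sigma> (tt k)" using kt by (intro adapted_const[OF ad]) auto
      then show "T (t - (s + tt k)) (f (\<sigma> (s + tt k)) (z (s + tt k)) (K (z (s + tt k))))
          = T (t - tt k - s) (f (\<sigma> (tt k)) (z (s + tt k)) (K (z (s + tt k))))"
        by (simp add: algebra_simps)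
    qed
  qed
  show ?thesis using CL zc W I by blast
qed

lemma PC_adapted: "\<sigma> \<in> PC \<Longrightarrow> \<exists>tt. adapted_switching \<sigma> tt"
  by (simp add: PC_def)

lemma PC_shift:
  assumes "\<sigma> \<in> PC" "0 \<le> a"
  shows "(\<lambda>t. \<sigma> (t + a)) \<in> PC"
proof -
  obtain tt where ad: "adapted_switching \<sigma> tt" using PC_adapted[OF assms(1)] by blast
  have ts: "time_seq tt" using adapted_ts[OF ad] .
  define j where "j = idx tt a"
  have j: "tt j \<le> a" "a < tt (Suc j)" using idx_prop[OF ts assms(2)] by (auto simp: j_def)
  define tt' where "tt' n = (if n = 0 then 0 else tt (j + n) - a)" for n
  have sm: "strict_mono tt'"
  proof (rule strict_monoI_Suc)
    fix n show "tt' n < tt' (Suc n)"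
      using j ts_less[OF ts, of "j + n" "Suc (j + n)"] by (auto simp: tt'_def)
  qed
  have lim: "filterlim tt' at_top sequentially"
    unfolding filterlim_at_top
  proof
    fix Z :: real
    obtain m where m: "Z + a < tt m" using ts_unbounded[OF ts] by blast
    have "Z \<le> tt' n" if "n \<ge> m + 1" for n
    proof -
      have "tt m \<le> tt (j + n)" using ts_mono[OF ts] that by simp
      then show ?thesis using m that by (auto simp: tt'_def)
    qed
    then show "eventually (\<lambda>n. Z \<le> tt' n) sequentially"
      unfolding eventually_sequentially by blast
  qed
  have "adapted_switching (\<lambda>t. \<sigma> (t + a)) tt'"
    unfolding adapted_switching_def time_seq_def
  proof (intro conjI allI impI sm lim)
    show "tt' 0 = 0" by (simp add: tt'_def)
    fix k t assume kt: "tt' k \<le> t \<and> t < tt' (Suc k)"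
    show "\<sigma> (t + a) = \<sigma> (tt' k + a)"
    proof (cases "k = 0")
      case True
      then have "tt j \<le> t + a" "t + a < tt (Suc j)" using kt j by (auto simp: tt'_def)
      then have "\<sigma> (t + a) = \<sigma> (tt j)" by (rule adapted_const[OF ad])
      moreover have "\<sigma> a = \<sigma> (tt j)" using j by (rule adapted_const[OF ad])
      ultimately show ?thesis using True by (simp add: tt'_def)
    next
      case False
      then have "tt (j + k) \<le> t + a" "t + a < tt (Suc (j + k))" using kt by (auto simp: tt'_def)
      then have "\<sigma> (t + a) = \<sigma> (tt (j + k))" by (rule adapted_const[OF ad])
      then show ?thesis using False by (simp add: tt'_def)
    qed
  qed
  then show ?thesis by (auto simp: PC_def)
qed

lemma sup_gronwall:
  fixes \<phi> :: "real \<Rightarrow> real"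
  assumes cont: "continuous_on {a..b} \<phi>" and nn: "\<And>t. t \<in> {a..b} \<Longrightarrow> \<phi> t \<ge> 0"
    and \<phi>a: "\<phi> a = 0" and \<kappa>: "\<kappa> \<ge> 0" and \<beta>: "\<beta> > 0" and \<gamma>: "\<gamma> \<ge> 0"
    and H: "\<And>c t B. a \<le> c \<Longrightarrow> c \<le> t \<Longrightarrow> t \<le> b \<Longrightarrow> (\<forall>s\<in>{a..t}. \<phi> s \<le> B) \<Longrightarrow>
              \<phi> t \<le> \<kappa> * \<phi> c + (t - c) * (\<beta> * B + \<gamma>)"
  shows "\<And>t. t \<in> {a..b} \<Longrightarrow> \<phi> t \<le> \<gamma> * ((1 / \<beta>) * (2 * (1 + \<kappa>)) ^ nat \<lceil>2 * \<beta> * (b - a)\<rceil>)"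
proof -
  define h where "h = 1 / (2 * \<beta>)"
  define q where "q = 2 * (1 + \<kappa>)"
  define A where "A = 2 * h * \<gamma>"
  have h0: "h > 0" using \<beta> by (simp add: h_def)
  have hb: "h * \<beta> = 1 / 2" using \<beta> by (simp add: h_def)
  have q2: "q \<ge> 2" using \<kappa> by (simp add: q_def)
  have A0: "A \<ge> 0" using h0 \<gamma> by (simp add: A_def)
  have claim: "\<forall>t\<in>{a..min b (a + real n * h)}. \<phi> t \<le> A * (q ^ n - 1)" for n
  proof (induction n)
    case 0
    show ?case using \<phi>a by auto
  next
    case (Suc n)
    define c where "c = min b (a + real n * h)"
    have qn: "q ^ n \<ge> 1" using q2 by (simp add: one_le_power)
    have Pn0: "A * (q ^ n - 1) \<ge> 0" using A0 qn by simp
    have mono: "A * (q ^ n - 1) \<le> A * (q ^ Suc n - 1)"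
      using A0 q2 qn by (intro mult_left_mono) (auto simp: power_increasing)
    have step: "q * (A * (q ^ n - 1)) + A \<le> A * (q ^ Suc n - 1)"
    proof -
      have "q * (A * (q ^ n - 1)) + A = A * q ^ Suc n - A * (q - 1)" by (simp add: algebra_simps)
      also have "\<dots> \<le> A * q ^ Suc n - A" using mult_left_mono[of 1 "q - 1" A] A0 q2 by simp
      finally show ?thesis by (simp add: algebra_simps)
    qed
    show ?case
    proof
      fix t assume t: "t \<in> {a..min b (a + real (Suc n) * h)}"
      show "\<phi> t \<le> A * (q ^ Suc n - 1)"
      proof (cases "t \<le> c")
        case True
        then have "\<phi> t \<le> A * (q ^ n - 1)" using Suc.IH t by (auto simp: c_def)
        then show ?thesis using mono by linarith
      next
        case False
        have ab: "a \<le> t" "t \<le> b" using t by auto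
        have ca: "a \<le> c" using ab h0 by (auto simp: c_def)
        have c_eq: "c = a + real n * h" using False t by (auto simp: c_def)
        have tc: "t - c \<le> h" using t c_eq by (auto simp: algebra_simps)
        have \<phi>c: "\<phi> c \<le> A * (q ^ n - 1)" using Suc.IH ca by (auto simp: c_def)
        obtain s where s: "s \<in> {a..t}" "\<forall>x\<in>{a..t}. \<phi> x \<le> \<phi> s"
          using continuous_attains_sup[OF compact_Icc _ continuous_on_subset[OF cont]] ab
          by (metis atLeastAtMost_iff atLeastatMost_empty_iff2 atLeastatMost_subset_iff order_refl)
        have "\<phi> s \<le> q * (A * (q ^ n - 1)) + A"
        proof (cases "s \<le> c")
          case True
          then have "\<phi> s \<le> A * (q ^ n - 1)" using Suc.IH s(1) by (auto simp: c_def)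
          moreover have "A * (q ^ n - 1) \<le> q * (A * (q ^ n - 1))"
            using Pn0 q2 by (simp add: mult_le_cancel_right1)
          ultimately show ?thesis using A0 by linarith
        next
          case False
          have H1: "\<phi> s \<le> \<kappa> * \<phi> c + (s - c) * (\<beta> * \<phi> s + \<gamma>)"
            using H[of c s "\<phi> s"] ca False s ab by auto
          have "\<phi> s \<ge> 0" using nn s ab by auto
          then have "(s - c) * (\<beta> * \<phi> s + \<gamma>) \<le> h * (\<beta> * \<phi> s + \<gamma>)"
            using False s tc \<beta> \<gamma> by (intro mult_right_mono) auto
          also have "\<dots> = \<phi> s / 2 + h * \<gamma>" using hb by (simp add: algebra_simps)
          finally have "\<phi> s \<le> \<kappa> * \<phi> c + \<phi> s / 2 + h * \<gamma>" using H1 by linarith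
          then have "\<phi> s \<le> 2 * \<kappa> * \<phi> c + A" by (simp add: A_def)
          moreover have "2 * \<kappa> * \<phi> c \<le> q * (A * (q ^ n - 1))"
          proof -
            have "2 * \<kappa> * \<phi> c \<le> 2 * \<kappa> * (A * (q ^ n - 1))" using \<phi>c \<kappa> by (intro mult_left_mono) auto
            also have "\<dots> \<le> q * (A * (q ^ n - 1))" using Pn0 by (intro mult_right_mono) (auto simp: q_def)
            finally show ?thesis .
          qed
          ultimately show ?thesis by linarith
        qed
        moreover have "\<phi> t \<le> \<phi> s" using s(2) ab by auto
        ultimately show ?thesis using step by linarith
      qed
    qed
  qed
  fix t assume t: "t \<in> {a..b}"
  define N where "N = nat \<lceil>2 * \<beta> * (b - a)\<rceil>"
  have "b \<le> a + real N * h"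
  proof -
    have "2 * \<beta> * (b - a) \<le> real N" unfolding N_def by linarith
    then have "(b - a) \<le> real N * h" using \<beta> by (simp add: h_def field_simps)
    then show ?thesis by simp
  qed
  then have "\<phi> t \<le> A * (q ^ N - 1)" using claim[of N] t by auto
  also have "\<dots> \<le> A * q ^ N" using A0 by (simp add: mult_left_mono)
  also have "\<dots> = \<gamma> * ((1 / \<beta>) * (2 * (1 + \<kappa>)) ^ N)" using \<beta> by (simp add: A_def h_def q_def)
  finally show "\<phi> t \<le> \<gamma> * ((1 / \<beta>) * (2 * (1 + \<kappa>)) ^ nat \<lceil>2 * \<beta> * (b - a)\<rceil>)" by (simp add: N_def)
qed

lemma idx_ge:
  assumes sk: "time_seq sk" and "sk m \<le> s"
  shows "sk m \<le> sk (idx sk s)" "s - sk (idx sk s) \<ge> 0"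
proof -
  have s0: "0 \<le> s" using ts_nonneg[OF sk, of m] assms(2) by linarith
  note ip = idx_prop[OF sk s0]
  show "sk m \<le> sk (idx sk s)"
  proof (rule ccontr)
    assume "\<not> ?thesis"
    then have "idx sk s < m" using ts_mono[OF sk, of m "idx sk s"] by (meson not_le)
    then have "sk (Suc (idx sk s)) \<le> sk m" using ts_mono[OF sk] by simp
    then show False using ip assms(2) by linarith
  qed
  show "s - sk (idx sk s) \<ge> 0" using ip by simp
qed

lemma window:
  fixes T :: "real \<Rightarrow> 'x::banach \<Rightarrow> 'x" and f :: "'q \<Rightarrow> 'x \<Rightarrow> 'u::banach \<Rightarrow> 'x"
    and K :: "'x \<Rightarrow> 'u"
  assumes G: "C0_group T"
    and f_lip: "\<forall>q. lipschitz_on Lf UNIV (\<lambda>(x, u). f q x u)" and Lf: "Lf > 0"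
    and f_zero: "\<forall>q. f q 0 0 = 0"
    and K_lip: "lipschitz_on LK UNIV K" and K_zero: "K 0 = 0"
    and Cb: "\<And>t v. \<bar>t\<bar> \<le> W \<Longrightarrow> norm (T t v) \<le> CW * norm v" and CW: "CW \<ge> 1" and W: "W \<ge> 0"
    and sk: "time_seq sk" and gaps: "\<forall>k. sk (Suc k) - sk k \<le> \<delta>" and \<delta>: "\<delta> \<le> W"
    and ad: "adapted_switching \<sigma> tt" and y: "sampled_traj T f K sk \<sigma> x0 y"
    and zc: "continuous_on UNIV z"
    and zW: "\<forall>t\<ge>0. T (-t) (z t) = y (sk m) + integral {0..t} (\<lambda>s. T (-s) (f (\<sigma> (s + sk m)) (z s) (K (z s))))"
    and zI: "\<forall>a b. 0 \<le> a \<longrightarrow> (\<lambda>s. T (-s) (f (\<sigma> (s + sk m)) (z s) (K (z s)))) integrable_on {a..b}"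
    and zb: "\<forall>s\<ge>0. norm (z s) \<le> Mz"
  shows "\<forall>t\<in>{sk m..sk m + W}. norm (y t - z (t - sk m)) \<le>
     (CW * Lf * LK * \<delta> * CW * (Lf * (1 + LK)) * Mz) *
     ((1 / (CW * Lf * (1 + LK * CW))) * (2 * (1 + CW)) ^ nat \<lceil>2 * (CW * Lf * (1 + LK * CW)) * W\<rceil>)"
proof -
  define a where "a = sk m"
  have a0: "0 \<le> a" unfolding a_def by (rule ts_nonneg[OF sk])
  have LK0: "LK \<ge> 0" using lipschitz_on_nonneg K_lip by blast
  define L1 where "L1 = Lf * (1 + LK)"
  have L10: "L1 \<ge> 0" using Lf LK0 by (simp add: L1_def)
  have gl: "norm (f q x (K x) - f q x' (K x')) \<le> L1 * norm (x - x')" for q x x'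
  proof -
    have "norm (f q x (K x) - f q x' (K x')) \<le> Lf * (norm (x - x') + norm (K x - K x'))"
      using lip_pair_bound[OF f_lip[rule_format, of q]] .
    also have "\<dots> \<le> Lf * (norm (x - x') + LK * norm (x - x'))"
      using lip_bound[OF K_lip] Lf by (intro mult_left_mono add_left_mono) auto
    also have "\<dots> = L1 * norm (x - x')" by (simp add: L1_def algebra_simps)
    finally show ?thesis .
  qed
  have gb: "norm (f q x (K x)) \<le> L1 * norm x" for q x
    using gl[of q x 0] f_zero K_zero by simp
  have Mz0: "Mz \<ge> 0" using zb norm_ge_zero[of "z 0"] by (meson order.trans order_refl)
  have \<delta>0: "\<delta> \<ge> 0" using gaps[rule_format, of 0] ts_less[OF sk, of 0 1] by simp
  define Fs where "Fs = (\<lambda>s. f (\<sigma> s) (y s) (K (T (s - sk (idx sk s)) (y (sk (idx sk s))))))"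
  define Gz where "Gz = (\<lambda>s. f (\<sigma> (s + a)) (z s) (K (z s)))"
  have yc: "continuous_on {0..} y" using y unfolding sampled_traj_def by blast
  note SM = sampled_mild[OF G f_lip K_lip sk ad y]
  have Yr: "((\<lambda>s. T (t - s) (Fs s)) has_integral (y t - T (t - c) (y c))) {c..t}"
    if "0 \<le> c" "c \<le> t" for c t
    unfolding Fs_def by (rule mild_restart[OF G SM(2) SM(1)]) (use that in auto)
  have Zr: "((\<lambda>s. T (t - s) (Gz s)) has_integral (z t - T (t - c) (z c))) {c..t}"
    if "0 \<le> c" "c \<le> t" for c t
    unfolding Gz_def a_def by (rule mild_restart[OF G]) (use that zW zI in auto)
  have Zs: "((\<lambda>s. T (t - s) (Gz (s - a))) has_integral (z (t - a) - T (t - c) (z (c - a)))) {c..t}"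
    if "a \<le> c" "c \<le> t" for c t
  proof -
    have "((\<lambda>s. T (t - a - s) (Gz s)) has_integral (z (t - a) - T (t - a - (c - a)) (z (c - a)))) {c - a..t - a}"
      using Zr[of "c - a" "t - a"] that by simp
    then have "((\<lambda>x. T (t - (x + a)) (Gz (x + a - a))) has_integral (z (t - a) - T (t - c) (z (c - a)))) {c - a..t - a}"
      by (simp add: algebra_simps)
    then show ?thesis
      using has_integral_shift_real_ivl_iff[of "\<lambda>s. T (t - s) (Gz (s - a))" _ c t a] by simp
  qed
  define e where "e t = y t - z (t - a)" for t
  have Er: "((\<lambda>s. T (t - s) (Fs s - Gz (s - a))) has_integral (e t - T (t - c) (e c))) {c..t}"
    if "a \<le> c" "c \<le> t" for c t
  proof -
    have "((\<lambda>s. T (t - s) (Fs s) - T (t - s) (Gz (s - a))) has_integral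
        ((y t - T (t - c) (y c)) - (z (t - a) - T (t - c) (z (c - a))))) {c..t}"
      using Yr[of c t] Zs[OF that] that a0 by (intro has_integral_diff) auto
    then show ?thesis unfolding e_def by (simp add: T_diff[OF G] algebra_simps)
  qed
  have zdiff: "norm (T (s - sk (idx sk s)) (z (sk (idx sk s) - a)) - z (s - a)) \<le> \<delta> * (CW * (L1 * Mz))"
    if s: "a \<le> s" for s
  proof -
    define sl where "sl = sk (idx sk s)"
    have sl: "a \<le> sl" "sl \<le> s" using idx_ge[OF sk, of m s] s unfolding a_def sl_def by auto
    have sgap: "s - sl \<le> \<delta>"
    proof -
      have "s < sk (Suc (idx sk s))" using idx_prop[OF sk] s a0 by auto
      then show ?thesis using gaps[rule_format, of "idx sk s"] unfolding sl_def by linarith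
    qed
    have "norm (z (s - a) - T (s - sl) (z (sl - a))) \<le> (CW * (L1 * Mz)) * (s - sl)"
    proof (rule has_integral_norm_le[OF Zs[OF sl]])
      show "sl \<le> s" using sl by simp
      fix r assume r: "r \<in> {sl..s}"
      have "norm (T (s - r) (Gz (r - a))) \<le> CW * norm (Gz (r - a))"
        using r sgap \<delta> by (intro Cb) auto
      also have "\<dots> \<le> CW * (L1 * norm (z (r - a)))"
        unfolding Gz_def using gb CW by (intro mult_left_mono) auto
      also have "\<dots> \<le> CW * (L1 * Mz)"
        using zb r sl CW L10 by (intro mult_left_mono) auto
      finally show "norm (T (s - r) (Gz (r - a))) \<le> CW * (L1 * Mz)" .
    qed
    also have "\<dots> \<le> (CW * (L1 * Mz)) * \<delta>"
      using sgap CW L10 Mz0 by (intro mult_left_mono) auto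
    finally show ?thesis by (simp add: sl_def norm_minus_commute mult.commute)
  qed
  define \<beta> where "\<beta> = CW * Lf * (1 + LK * CW)"
  define \<gamma>0 where "\<gamma>0 = CW * Lf * LK * \<delta> * CW * (Lf * (1 + LK)) * Mz"
  have \<beta>0: "\<beta> > 0"
  proof -
    have "1 + LK * CW > 0" using CW LK0 by (smt (verit) mult_nonneg_nonneg)
    then show ?thesis using CW Lf by (simp add: \<beta>_def)
  qed
  have \<gamma>00: "\<gamma>0 \<ge> 0" using CW Lf LK0 \<delta>0 Mz0 by (simp add: \<gamma>0_def)
  have Fbound: "norm (Fs s - Gz (s - a)) \<le> Lf * (1 + LK * CW) * B + Lf * LK * (\<delta> * (CW * (L1 * Mz)))"
    if s: "a \<le> s" and B: "\<forall>r\<in>{a..s}. norm (e r) \<le> B" for s B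
  proof -
    define sl where "sl = sk (idx sk s)"
    have sl: "a \<le> sl" "sl \<le> s" using idx_ge[OF sk, of m s] s unfolding a_def sl_def by auto
    have sgap: "s - sl \<le> \<delta>"
    proof -
      have "s < sk (Suc (idx sk s))" using idx_prop[OF sk] s a0 by auto
      then show ?thesis using gaps[rule_format, of "idx sk s"] unfolding sl_def by linarith
    qed
    have Ts: "norm (T (s - sl) v) \<le> CW * norm v" for v using sl sgap \<delta> by (intro Cb) auto
    have "Fs s - Gz (s - a) = f (\<sigma> s) (y s) (K (T (s - sl) (y sl))) - f (\<sigma> s) (z (s - a)) (K (z (s - a)))"
      unfolding Fs_def Gz_def sl_def by simp
    then have "norm (Fs s - Gz (s - a)) \<le> Lf * (norm (y s - z (s - a)) + norm (K (T (s - sl) (y sl)) - K (z (s - a))))"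
      using lip_pair_bound[OF f_lip[rule_format, of "\<sigma> s"]] by simp
    also have "\<dots> \<le> Lf * (norm (e s) + LK * norm (T (s - sl) (y sl) - z (s - a)))"
      unfolding e_def using lip_bound[OF K_lip] Lf by (intro mult_left_mono add_left_mono) auto
    also have "norm (T (s - sl) (y sl) - z (s - a)) \<le> CW * B + \<delta> * (CW * (L1 * Mz))"
    proof -
      have "T (s - sl) (y sl) - z (s - a) = T (s - sl) (e sl) + (T (s - sl) (z (sl - a)) - z (s - a))"
        unfolding e_def by (simp add: T_diff[OF G])
      then have "norm (T (s - sl) (y sl) - z (s - a)) \<le> norm (T (s - sl) (e sl)) + norm (T (s - sl) (z (sl - a)) - z (s - a))"
        by (metis norm_triangle_ineq)
      moreover have "norm (T (s - sl) (e sl)) \<le> CW * B"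
        using Ts[of "e sl"] B sl CW by (smt (verit, best) atLeastAtMost_iff mult_left_mono)
      moreover have "norm (T (s - sl) (z (sl - a)) - z (s - a)) \<le> \<delta> * (CW * (L1 * Mz))"
        using zdiff[OF s] unfolding sl_def .
      ultimately show ?thesis by linarith
    qed
    then have "Lf * (norm (e s) + LK * norm (T (s - sl) (y sl) - z (s - a))) \<le>
        Lf * (B + LK * (CW * B + \<delta> * (CW * (L1 * Mz))))"
      using B s Lf LK0 by (intro mult_left_mono add_mono) auto
    finally show ?thesis by (simp add: algebra_simps)
  qed
  have ec: "continuous_on {a..a + W} (\<lambda>t. norm (e t))"
  proof -
    have "continuous_on {a..a + W} y" using continuous_on_subset[OF yc] a0 by auto
    moreover have "continuous_on {a..a + W} (\<lambda>t. z (t - a))"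
      by (rule continuous_on_compose2[OF zc]) (auto intro: continuous_intros)
    ultimately show ?thesis unfolding e_def by (intro continuous_intros)
  qed
  have ea: "norm (e a) = 0"
  proof -
    have "T (-0) (z 0) = y a + integral {0..0} (\<lambda>s. T (-s) (f (\<sigma> (s + sk m)) (z s) (K (z s))))"
      using zW[rule_format, of 0] unfolding a_def by simp
    then have "z 0 = y a" using C0_zero[OF G] by simp
    then show ?thesis by (simp add: e_def)
  qed
  have main: "\<forall>t\<in>{a..a + W}. norm (e t) \<le> \<gamma>0 * ((1 / \<beta>) * (2 * (1 + CW)) ^ nat \<lceil>2 * \<beta> * (a + W - a)\<rceil>)"
  proof (intro ballI sup_gronwall[OF ec _ ea _ \<beta>0 \<gamma>00])
    show "0 \<le> CW" using CW by simp
    fix c t B assume ct: "a \<le> c" "c \<le> t" "t \<le> a + W" and B: "\<forall>s\<in>{a..t}. norm (e s) \<le> B"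
    have "norm (e t - T (t - c) (e c)) \<le> (\<beta> * B + \<gamma>0) * (t - c)"
    proof (rule has_integral_norm_le[OF Er[OF ct(1,2)] ct(2)])
      fix s assume s: "s \<in> {c..t}"
      have "norm (T (t - s) (Fs s - Gz (s - a))) \<le> CW * norm (Fs s - Gz (s - a))"
        using s ct by (intro Cb) auto
      also have "\<dots> \<le> CW * (Lf * (1 + LK * CW) * B + Lf * LK * (\<delta> * (CW * (L1 * Mz))))"
        using Fbound[of s B] s ct B CW by (intro mult_left_mono) auto
      also have "\<dots> = \<beta> * B + \<gamma>0" by (simp add: \<beta>_def \<gamma>0_def L1_def algebra_simps)
      finally show "norm (T (t - s) (Fs s - Gz (s - a))) \<le> \<beta> * B + \<gamma>0" .
    qed
    moreover have "norm (T (t - c) (e c)) \<le> CW * norm (e c)" using ct W by (intro Cb) auto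
    ultimately show "norm (e t) \<le> CW * norm (e c) + (t - c) * (\<beta> * B + \<gamma>0)"
      by (smt (verit) mult.commute norm_triangle_ineq4 norm_minus_commute norm_triangle_sub)
  qed auto
  then show ?thesis unfolding e_def a_def \<beta>_def \<gamma>0_def by simp
qed

lemma half_pow: "exp (- (real n * ln 2)) = (1 / 2 :: real) ^ n"
proof -
  have "exp (real n * ln 2) = (2::real) ^ n" by (simp add: exp_of_nat_mult)
  then show ?thesis by (simp add: exp_minus power_one_over inverse_eq_divide)
qed

lemma next_idx:
  assumes sk: "time_seq sk" and gaps: "\<forall>k. sk (Suc k) - sk k \<le> \<delta>" and \<tau>: "\<tau> > 0"
  shows "\<exists>m'. m < m' \<and> sk m + \<tau> \<le> sk m' \<and> sk m' \<le> sk m + \<tau> + \<delta>"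
proof -
  obtain n where n: "sk m + \<tau> < sk n" using ts_unbounded[OF sk] by blast
  define m' where "m' = (LEAST n. sk m + \<tau> \<le> sk n)"
  have m'1: "sk m + \<tau> \<le> sk m'" unfolding m'_def by (rule LeastI[of _ n]) (use n in linarith)
  have m'2: "m < m'"
  proof (rule ccontr)
    assume "\<not> m < m'" then have "sk m' \<le> sk m" using ts_mono[OF sk] by simp
    then show False using m'1 \<tau> by linarith
  qed
  then obtain p where p: "m' = Suc p" by (cases m') auto
  have "p < (LEAST n. sk m + \<tau> \<le> sk n)" using p unfolding m'_def by simp
  then have "\<not> sk m + \<tau> \<le> sk p" by (rule not_less_Least)
  moreover have "sk m' \<le> sk p + \<delta>" using gaps[rule_format, of p] p by simp
  ultimately have "sk m' \<le> sk m + \<tau> + \<delta>" by linarith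
  then show ?thesis using m'1 m'2 by blast
qed

theorem theorem8:
  fixes T :: "real \<Rightarrow> 'x::banach \<Rightarrow> 'x"
    and f :: "'q \<Rightarrow> 'x \<Rightarrow> 'u::banach \<Rightarrow> 'x"
    and K :: "'x \<Rightarrow> 'u"
    and M lam :: "real \<Rightarrow> real"
    and Lf :: real
  assumes group: "C0_group T"
    and Lf_pos: "Lf > 0"
    and f_lip: "\<forall>q. lipschitz_on Lf UNIV (\<lambda>(x, u). f q x u)"
    and f_zero: "\<forall>q. f q 0 0 = 0"
    and K_lip: "\<exists>LK. lipschitz_on LK UNIV K"
    and K_zero: "K 0 = 0"
    and M_lam_pos: "\<forall>r>0. M r > 0 \<and> lam r > 0"
    and USGES: "\<forall>r>0. \<forall>t\<ge>0. \<forall>x \<sigma> y. norm x \<le> r \<longrightarrow> \<sigma> \<in> PC \<longrightarrow>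
                   closed_loop_traj T f K \<sigma> x y \<longrightarrow>
                   norm (y t) \<le> M r * exp (- lam r * t) * norm x"
    and M_growth: "filterlim (\<lambda>r. r / M r) at_top at_top"
  shows "\<forall>r>0. \<exists>\<delta>star>0. \<forall>sk. time_seq sk \<longrightarrow>
           (\<exists>\<delta><\<delta>star. \<forall>k. sk (Suc k) - sk k \<le> \<delta>) \<longrightarrow>
           (\<exists>M' lam'. M' > 0 \<and> lam' > 0 \<and>
              (\<forall>t\<ge>0. \<forall>x \<sigma> y. norm x \<le> r \<longrightarrow> \<sigma> \<in> PC \<longrightarrow>
                 sampled_traj T f K sk \<sigma> x y \<longrightarrow>
                 norm (y t) \<le> M' * exp (- lam' * t) * norm x))"
proof (intro allI impI)
  fix r :: real assume r: "r > 0"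
  define M0 where "M0 = M r"
  define l0 where "l0 = lam r"
  have M0: "M0 > 0" and l0: "l0 > 0" using M_lam_pos r by (auto simp: M0_def l0_def)
  obtain C \<omega> where C: "C \<ge> 1" "\<omega> \<ge> 0" and Cb0: "\<And>t v. norm (T t v) \<le> C * exp (\<omega> * \<bar>t\<bar>) * norm v"
    using C0_exp_bound[OF group] by blast
  obtain LK where LK: "lipschitz_on LK UNIV K" using K_lip by blast
  have LK0: "LK \<ge> 0" using lipschitz_on_nonneg LK by blast
  define \<tau> where "\<tau> = \<bar>ln (4 * M0)\<bar> / l0 + 1"
  have \<tau>0: "\<tau> > 0"
  proof -
    have "\<bar>ln (4 * M0)\<bar> / l0 \<ge> 0" using l0 by simp
    then show ?thesis by (simp add: \<tau>_def)
  qed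
  have decay: "M0 * exp (- l0 * s) \<le> 1 / 4" if "s \<ge> \<tau>" for s
  proof -
    have "l0 * s \<ge> l0 * \<tau>" using that l0 by simp
    moreover have "l0 * \<tau> \<ge> ln (4 * M0)"
    proof -
      have "l0 * \<tau> = \<bar>ln (4 * M0)\<bar> + l0" using l0 by (simp add: \<tau>_def field_simps)
      then show ?thesis using l0 abs_ge_self[of "ln (4 * M0)"] by linarith
    qed
    ultimately have "- l0 * s \<le> - ln (4 * M0)" by linarith
    then have "exp (- l0 * s) \<le> exp (- ln (4 * M0))" by simp
    also have "\<dots> = 1 / (4 * M0)" using M0 by (simp add: exp_minus inverse_eq_divide)
    finally show ?thesis using M0 by (simp add: field_simps)
  qed
  define W where "W = \<tau> + 1"
  have W0: "W \<ge> 1" using \<tau>0 by (simp add: W_def)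
  define CW where "CW = C * exp (\<omega> * W)"
  have CW1: "CW \<ge> 1"
  proof -
    have "exp (\<omega> * W) \<ge> 1" using C W0 by simp
    then have "1 * 1 \<le> C * exp (\<omega> * W)" using C by (intro mult_mono) auto
    then show ?thesis by (simp add: CW_def)
  qed
  have Cb: "norm (T t v) \<le> CW * norm v" if "\<bar>t\<bar> \<le> W" for t v
  proof -
    have "norm (T t v) \<le> C * exp (\<omega> * \<bar>t\<bar>) * norm v" by (rule Cb0)
    also have "\<dots> \<le> CW * norm v" unfolding CW_def
      using that C by (intro mult_right_mono mult_left_mono) (auto intro: mult_left_mono)
    finally show ?thesis .
  qed
  define \<beta> where "\<beta> = CW * Lf * (1 + LK * CW)"
  define Kg where "Kg = (1 / \<beta>) * (2 * (1 + CW)) ^ nat \<lceil>2 * \<beta> * W\<rceil>"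
  define Q where "Q = CW * Lf * LK * CW * (Lf * (1 + LK)) * Kg"
  have \<beta>0: "\<beta> > 0"
  proof -
    have "1 + LK * CW > 0" using CW1 LK0 by (smt (verit) mult_nonneg_nonneg)
    then show ?thesis using CW1 Lf_pos by (simp add: \<beta>_def)
  qed
  have Kg0: "Kg \<ge> 0" using \<beta>0 CW1 by (simp add: Kg_def)
  have Q0: "Q \<ge> 0" using CW1 Lf_pos LK0 Kg0 by (simp add: Q_def)
  define \<delta>star where "\<delta>star = 1 / (4 * Q * M0 + 1)"
  have QM0: "4 * Q * M0 + 1 > 0" using Q0 M0 by (smt (verit) mult_nonneg_nonneg)
  show "\<exists>\<delta>star>0. \<forall>sk. time_seq sk \<longrightarrow>
           (\<exists>\<delta><\<delta>star. \<forall>k. sk (Suc k) - sk k \<le> \<delta>) \<longrightarrow>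
           (\<exists>M' lam'. M' > 0 \<and> lam' > 0 \<and>
              (\<forall>t\<ge>0. \<forall>x \<sigma> y. norm x \<le> r \<longrightarrow> \<sigma> \<in> PC \<longrightarrow>
                 sampled_traj T f K sk \<sigma> x y \<longrightarrow>
                 norm (y t) \<le> M' * exp (- lam' * t) * norm x))"
  proof (rule exI[of _ \<delta>star], intro conjI allI impI)
    show "\<delta>star > 0" using QM0 by (simp add: \<delta>star_def)
    fix sk assume sk: "time_seq sk" and "\<exists>\<delta><\<delta>star. \<forall>k. sk (Suc k) - sk k \<le> \<delta>"
    then obtain \<delta> where \<delta>: "\<delta> < \<delta>star" and gaps: "\<forall>k. sk (Suc k) - sk k \<le> \<delta>" by blast
    have \<delta>0: "\<delta> \<ge> 0" using gaps[rule_format, of 0] ts_less[OF sk, of 0 1] by simp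
    have \<delta>1: "\<delta> \<le> 1"
    proof -
      have "\<delta>star \<le> 1" using QM0 Q0 M0 by (simp add: \<delta>star_def field_simps)
      then show ?thesis using \<delta> by simp
    qed
    have \<delta>Q: "\<delta> * Q * M0 \<le> 1 / 4"
    proof -
      have "\<delta> * (4 * Q * M0 + 1) < 1" using \<delta> QM0 by (simp add: \<delta>star_def field_simps)
      then show ?thesis using \<delta>0 by (simp add: algebra_simps)
    qed
    define M' where "M' = 2 * (M0 + 1 / 4) + 1"
    define lam' where "lam' = ln 2 / W"
    show "\<exists>M' lam'. M' > 0 \<and> lam' > 0 \<and>
              (\<forall>t\<ge>0. \<forall>x \<sigma> y. norm x \<le> r \<longrightarrow> \<sigma> \<in> PC \<longrightarrow>
                 sampled_traj T f K sk \<sigma> x y \<longrightarrow>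
                 norm (y t) \<le> M' * exp (- lam' * t) * norm x)"
    proof (rule exI[of _ M'], rule exI[of _ lam'], intro conjI allI impI)
      show "M' > 0" using M0 by (simp add: M'_def)
      show "lam' > 0" using W0 by (simp add: lam'_def)
      fix t :: real and x :: 'x and \<sigma> :: "real \<Rightarrow> 'q" and y
      assume t: "0 \<le> t" and x: "norm x \<le> r" and \<sigma>: "\<sigma> \<in> PC" and y: "sampled_traj T f K sk \<sigma> x y"
      obtain tt where ad: "adapted_switching \<sigma> tt" using PC_adapted[OF \<sigma>] by blast
      have y0: "y 0 = x" using y by (simp add: sampled_traj_def)
      have STEP: "norm (y s) \<le> (M0 * exp (- l0 * (s - sk m)) + 1 / 4) * norm (y (sk m))"
        if ym: "norm (y (sk m)) \<le> r" and s: "s \<in> {sk m..sk m + W}" for m s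
      proof -
        define a where "a = sk m"
        have a0: "0 \<le> a" unfolding a_def by (rule ts_nonneg[OF sk])
        have \<sigma>': "(\<lambda>s. \<sigma> (s + a)) \<in> PC" by (rule PC_shift[OF \<sigma> a0])
        obtain tt' where ad': "adapted_switching (\<lambda>s. \<sigma> (s + a)) tt'" using PC_adapted[OF \<sigma>'] by blast
        obtain z where zCL: "closed_loop_traj T f K (\<lambda>s. \<sigma> (s + a)) (y a) z" and zc: "continuous_on UNIV z"
          and zW: "\<forall>t\<ge>0. T (-t) (z t) = y a + integral {0..t} (\<lambda>s. T (-s) (f (\<sigma> (s + a)) (z s) (K (z s))))"
          and zI: "\<forall>a' b. 0 \<le> a' \<longrightarrow> (\<lambda>s. T (-s) (f (\<sigma> (s + a)) (z s) (K (z s)))) integrable_on {a'..b}"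
          using closed_loop_exists[OF group f_lip f_zero LK K_zero ad', of "y a"] by blast
        have zdec: "norm (z s') \<le> M0 * exp (- l0 * s') * norm (y a)" if "s' \<ge> 0" for s'
          using USGES r that ym \<sigma>' zCL unfolding M0_def l0_def a_def by blast
        have zb: "\<forall>s'\<ge>0. norm (z s') \<le> M0 * norm (y a)"
        proof (intro allI impI)
          fix s' :: real assume s': "s' \<ge> 0"
          have "exp (- l0 * s') \<le> 1" using l0 s' by simp
          then have "M0 * exp (- l0 * s') * norm (y a) \<le> M0 * 1 * norm (y a)"
            using M0 by (intro mult_right_mono mult_left_mono) auto
          then show "norm (z s') \<le> M0 * norm (y a)" using zdec[OF s'] by simp
        qed
        have win: "\<forall>t\<in>{sk m..sk m + W}. norm (y t - z (t - sk m)) \<le>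
           (CW * Lf * LK * \<delta> * CW * (Lf * (1 + LK)) * (M0 * norm (y a))) *
           ((1 / (CW * Lf * (1 + LK * CW))) * (2 * (1 + CW)) ^ nat \<lceil>2 * (CW * Lf * (1 + LK * CW)) * W\<rceil>)"
          by (rule window[OF group f_lip Lf_pos f_zero LK K_zero Cb CW1 _ sk gaps _ ad y zc])
             (use W0 \<delta>1 zW zI zb in \<open>auto simp: a_def\<close>)
        have eqc: "(CW * Lf * LK * \<delta> * CW * (Lf * (1 + LK)) * (M0 * norm (y a))) *
           ((1 / (CW * Lf * (1 + LK * CW))) * (2 * (1 + CW)) ^ nat \<lceil>2 * (CW * Lf * (1 + LK * CW)) * W\<rceil>)
           = (\<delta> * Q * M0) * norm (y a)"
          unfolding Q_def Kg_def \<beta>_def by (simp only: mult.assoc mult.commute mult.left_commute)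
        have "norm (y s - z (s - a)) \<le> (\<delta> * Q * M0) * norm (y a)"
          using win[rule_format, OF s] unfolding eqc[unfolded a_def] a_def .
        also have "\<dots> \<le> 1 / 4 * norm (y a)" using \<delta>Q by (intro mult_right_mono) auto
        finally have e: "norm (y s - z (s - a)) \<le> 1 / 4 * norm (y a)" .
        have "norm (z (s - a)) \<le> M0 * exp (- l0 * (s - a)) * norm (y a)"
          using zdec s by (simp add: a_def)
        then have "norm (y s) \<le> M0 * exp (- l0 * (s - a)) * norm (y a) + 1 / 4 * norm (y a)"
          using e norm_triangle_sub[of "y s" "z (s - a)"] by linarith
        then show ?thesis by (simp add: a_def algebra_simps)
      qed
      have NX: "\<forall>m. \<exists>m'. m < m' \<and> sk m + \<tau> \<le> sk m' \<and> sk m' \<le> sk m + \<tau> + \<delta>"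
        using next_idx[OF sk gaps \<tau>0] by blast
      then obtain nxt where nxt: "\<And>m. m < nxt m \<and> sk m + \<tau> \<le> sk (nxt m) \<and> sk (nxt m) \<le> sk m + \<tau> + \<delta>"
        by metis
      define ms where "ms j = (nxt ^^ j) 0" for j
      have ms_Suc: "ms (Suc j) = nxt (ms j)" for j by (simp add: ms_def)
      have claim: "norm (y (sk (ms j))) \<le> (1 / 2) ^ j * norm x \<and> real j * \<tau> \<le> sk (ms j) \<and>
          sk (ms j) \<le> real j * W \<and> (\<forall>s\<in>{0..sk (ms j)}. norm (y s) \<le> M' * exp (- lam' * s) * norm x)" for j
      proof (induction j)
        case 0
        have "ms 0 = 0" by (simp add: ms_def)
        moreover have "norm x \<le> M' * norm x" using M0 by (simp add: M'_def mult_le_cancel_right1)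
        ultimately show ?case using ts_0[OF sk] y0 by auto
      next
        case (Suc j)
        define a where "a = sk (ms j)"
        have IH1: "norm (y a) \<le> (1 / 2) ^ j * norm x" using Suc.IH by (simp add: a_def)
        have ya_r: "norm (y a) \<le> r"
        proof -
          have "(1 / 2 :: real) ^ j \<le> 1" by (simp add: power_le_one)
          then have "(1 / 2) ^ j * norm x \<le> 1 * norm x" by (intro mult_right_mono) auto
          then show ?thesis using IH1 x by linarith
        qed
        have n1: "a + \<tau> \<le> sk (ms (Suc j))" "sk (ms (Suc j)) \<le> a + W"
          using nxt[of "ms j"] \<delta>1 by (auto simp: ms_Suc a_def W_def)
        have st: "norm (y s) \<le> (M0 * exp (- l0 * (s - a)) + 1 / 4) * norm (y a)" if "s \<in> {a..a + W}" for s
          using STEP[of "ms j" s] ya_r that by (simp add: a_def)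
        have new: "norm (y (sk (ms (Suc j)))) \<le> (1 / 2) ^ Suc j * norm x"
        proof -
          have "norm (y (sk (ms (Suc j)))) \<le> (M0 * exp (- l0 * (sk (ms (Suc j)) - a)) + 1 / 4) * norm (y a)"
            using st n1 \<tau>0 by auto
          also have "\<dots> \<le> (1 / 4 + 1 / 4) * norm (y a)"
            using decay[of "sk (ms (Suc j)) - a"] n1 by (intro mult_right_mono) auto
          also have "\<dots> \<le> 1 / 2 * ((1 / 2) ^ j * norm x)" using IH1 by simp
          finally show ?thesis by simp
        qed
        have lo: "real (Suc j) * \<tau> \<le> sk (ms (Suc j))" using Suc.IH n1 by (simp add: a_def algebra_simps)
        have hi: "sk (ms (Suc j)) \<le> real (Suc j) * W" using Suc.IH n1 by (simp add: a_def algebra_simps)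
        have bnd: "\<forall>s\<in>{0..sk (ms (Suc j))}. norm (y s) \<le> M' * exp (- lam' * s) * norm x"
        proof
          fix s assume s: "s \<in> {0..sk (ms (Suc j))}"
          show "norm (y s) \<le> M' * exp (- lam' * s) * norm x"
          proof (cases "s \<le> a")
            case True then show ?thesis using Suc.IH s by (auto simp: a_def)
          next
            case False
            then have sa: "s \<in> {a..a + W}" using s n1 by auto
            have "norm (y s) \<le> (M0 * exp (- l0 * (s - a)) + 1 / 4) * norm (y a)" by (rule st[OF sa])
            also have "\<dots> \<le> (M0 + 1 / 4) * ((1 / 2) ^ j * norm x)"
            proof (intro mult_mono)
              show "M0 * exp (- l0 * (s - a)) + 1 / 4 \<le> M0 + 1 / 4"
                using M0 l0 False by (simp add: mult_le_cancel_left1)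
            qed (use IH1 M0 in auto)
            also have "\<dots> = (2 * (M0 + 1 / 4)) * (1 / 2) ^ Suc j * norm x" by simp
            also have "\<dots> \<le> M' * exp (- lam' * s) * norm x"
            proof (intro mult_right_mono)
              have "lam' * s \<le> lam' * (real (Suc j) * W)"
                using hi s W0 by (intro mult_left_mono) (auto simp: lam'_def)
              also have "\<dots> = real (Suc j) * ln 2" using W0 by (simp add: lam'_def)
              finally have "exp (- (real (Suc j) * ln 2)) \<le> exp (- lam' * s)" by simp
              then have hp: "(1 / 2) ^ Suc j \<le> exp (- lam' * s)" by (simp only: half_pow)
              have "(2 * (M0 + 1 / 4)) * (1 / 2) ^ Suc j \<le> (2 * (M0 + 1 / 4)) * exp (- lam' * s)"
                using hp M0 by (intro mult_left_mono) auto
              also have "\<dots> \<le> M' * exp (- lam' * s)" by (simp add: M'_def)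
              finally show "(2 * (M0 + 1 / 4)) * (1 / 2) ^ Suc j \<le> M' * exp (- lam' * s)" .
            qed simp
            finally show ?thesis .
          qed
        qed
        show ?case using new lo hi bnd by blast
      qed
      define j where "j = nat \<lceil>t / \<tau>\<rceil>"
      have "t \<le> real j * \<tau>"
      proof -
        have "t / \<tau> \<le> real j" unfolding j_def by linarith
        then show ?thesis using \<tau>0 by (simp add: field_simps)
      qed
      then have "t \<in> {0..sk (ms j)}" using claim[of j] t by auto
      then show "norm (y t) \<le> M' * exp (- lam' * t) * norm x" using claim[of j] by blast
    qed
  qed
qed

end
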